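(* For every integer $n\ge 0$, $c_2(5n+2)\equiv 0 \pmod 2$.
   Context: A partition of $n\ge 0$ is a finite multiset of positive integers summing to $n$. For $n\ge 0$, $c_2(n)$ denotes the number of pairs $(j,\lambda)$, where $j\ge 1$ is an integer and $\lambda$ is a partition of $n$, such that: each of the odd integers $1,3,\dots,2j-1$ appears in $\lambda$ exactly once; every even part of $\lambda$ is greater than $2j$ and the even parts of $\lambda$ are distinct; odd parts $\ge 2j+1$ may appear with any multiplicity. (A single partition is counted once for each $j$ for which these conditions hold.) *)

theory Defs
  imports Main "HOL-Library.Multiset"
begin

definition is_partition :: "nat multiset \<Rightarrow> nat \<Rightarrow> bool" where
  "is_partition lam n \<longleftrightarrow> (\<forall>p\<in>#lam. p > 0) \<and> sum_mset lam = n"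

definition c2_cond :: "nat \<Rightarrow> nat multiset \<Rightarrow> bool" where
  "c2_cond j lam \<longleftrightarrow> j \<ge> 1
     \<and> (\<forall>i\<in>{1..j}. count lam (2*i - 1) = 1)
     \<and> (\<forall>p\<in>#lam. even p \<longrightarrow> p > 2*j \<and> count lam p = 1)"

definition c2 :: "nat \<Rightarrow> nat" where
  "c2 n = card {(j, lam). is_partition lam n \<and> c2_cond j lam}"

end

theory Submission
  imports Defs "HOL-Computational_Algebra.Formal_Power_Series" "HOL-Library.Z2"
begin

unbundle fps_syntax

abbreviation XX :: "bit fps" where "XX \<equiv> fps_X"

lemma bit_add_self [simp]: "(a::bit) + a = 0"
  by (cases a) simp_all

lemma fps_add_self [simp]: "(f::bit fps) + f = 0"
  by (rule fps_ext) (simp only: fps_add_nth bit_add_self fps_zero_nth)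

definition teq :: "nat \<Rightarrow> bit fps \<Rightarrow> bit fps \<Rightarrow> bool" where
  "teq M f g \<longleftrightarrow> (\<forall>i<M. f $ i = g $ i)"

lemma teq_refl [simp]: "teq M f f"
  by (simp add: teq_def)

lemma teq_sym: "teq M f g \<Longrightarrow> teq M g f"
  by (simp add: teq_def)

lemma teq_trans [trans]: "teq M f g \<Longrightarrow> teq M g h \<Longrightarrow> teq M f h"
  by (simp add: teq_def)

lemma teq_mono: "teq M f g \<Longrightarrow> M' \<le> M \<Longrightarrow> teq M' f g"
  by (simp add: teq_def)

lemma teq_add: "teq M f g \<Longrightarrow> teq M h k \<Longrightarrow> teq M (f + h) (g + k)"
  by (simp add: teq_def)

lemma teq_mult: "teq M f g \<Longrightarrow> teq M h k \<Longrightarrow> teq M (f * h) (g * k)"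
  unfolding teq_def
proof (intro allI impI)
  fix i assume A: "\<forall>i<M. f $ i = g $ i" "\<forall>i<M. h $ i = k $ i" and i: "i < M"
  show "(f * h) $ i = (g * k) $ i"
    unfolding fps_mult_nth
    by (rule sum.cong) (use A i in auto)
qed

lemma teq_sum: "(\<And>x. x \<in> A \<Longrightarrow> teq M (f x) (g x)) \<Longrightarrow> teq M (\<Sum>x\<in>A. f x) (\<Sum>x\<in>A. g x)"
  by (simp add: teq_def fps_sum_nth)

lemma teq_Xpow: "a \<ge> M \<Longrightarrow> teq M (XX ^ a * f) 0"
  by (simp add: teq_def fps_X_power_mult_nth)

lemma teq_Xpow': "a \<ge> M \<Longrightarrow> teq M (XX ^ a) 0"
  using teq_Xpow[of M a 1] by simp

lemma teq_inverse:
  assumes "teq M f g" "f $ 0 \<noteq> 0"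
  shows "teq M (inverse f) (inverse g)"
proof (cases "M = 0")
  case True then show ?thesis by (simp add: teq_def)
next
  case False
  then have g0: "g $ 0 \<noteq> 0" using assms by (simp add: teq_def)
  have "teq M (inverse f * g) (inverse f * f)"
    by (rule teq_mult) (use assms teq_sym in auto)
  then have 1: "teq M (inverse f * g) 1" using assms(2) by (simp add: inverse_mult_eq_1)
  have "teq M (inverse f * g * inverse g) (1 * inverse g)"
    by (rule teq_mult[OF 1]) simp
  moreover have "inverse f * g * inverse g = inverse f"
    using g0 by (simp add: mult.assoc inverse_mult_eq_1')
  ultimately show ?thesis by simp
qed

definition E :: "nat \<Rightarrow> nat \<Rightarrow> nat \<Rightarrow> bit fps" where
  "E c d n = (\<Prod>i<n. 1 + XX ^ (c + d * i))"

lemma E_0 [simp]: "E c d 0 = 1"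
  by (simp add: E_def)

lemma E_Suc: "E c d (Suc n) = E c d n * (1 + XX ^ (c + d * n))"
  by (simp add: E_def)

lemma E_add: "E c d (m + n) = E c d m * E (c + d * m) d n"
proof (induction n)
  case 0 then show ?case by simp
next
  case (Suc n)
  have "E c d (m + Suc n) = E c d (m + n) * (1 + XX ^ (c + d * (m + n)))"
    by (simp add: E_Suc)
  also have "\<dots> = E c d m * (E (c + d * m) d n * (1 + XX ^ (c + d * m + d * n)))"
    by (simp add: Suc mult.assoc algebra_simps)
  also have "\<dots> = E c d m * E (c + d * m) d (Suc n)"
    by (simp add: E_Suc)
  finally show ?case .
qed

lemma E_nth0 [simp]: "c > 0 \<Longrightarrow> E c d n $ 0 = 1"
  by (induction n) (simp_all add: E_Suc)

lemma E_nonzero [simp]: "c > 0 \<Longrightarrow> E c d n $ 0 \<noteq> 0"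
  by simp

lemma teq_one_plus: "a \<ge> M \<Longrightarrow> teq M (1 + XX ^ a) 1"
  by (simp add: teq_def)

lemma E_trunc1: "c \<ge> M \<Longrightarrow> teq M (E c d n) 1"
proof (induction n)
  case 0 then show ?case by simp
next
  case (Suc n)
  have "teq M (E c d n * (1 + XX ^ (c + d * n))) (1 * 1)"
    by (rule teq_mult) (use Suc in \<open>auto intro: teq_one_plus\<close>)
  then show ?case by (simp add: E_Suc)
qed

lemma E_trunc_le: "c + d * m \<ge> M \<Longrightarrow> m \<le> n \<Longrightarrow> teq M (E c d n) (E c d m)"
proof -
  assume a: "c + d * m \<ge> M" "m \<le> n"
  have "E c d n = E c d m * E (c + d * m) d (n - m)"
    using E_add[of c d m "n - m"] a by simp
  moreover have "teq M (E c d m * E (c + d * m) d (n - m)) (E c d m * 1)"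
    by (rule teq_mult) (use a E_trunc1 in auto)
  ultimately show ?thesis by simp
qed

lemma E_trunc: "c + d * min m n \<ge> M \<Longrightarrow> teq M (E c d n) (E c d m)"
proof (cases "m \<le> n")
  case True
  assume "c + d * min m n \<ge> M"
  then show ?thesis using True by (intro E_trunc_le) (auto simp: min_def)
next
  case False
  assume "c + d * min m n \<ge> M"
  then have "teq M (E c d m) (E c d n)" using False by (intro E_trunc_le) (auto simp: min_def)
  then show ?thesis by (rule teq_sym)
qed

fun tri :: "nat \<Rightarrow> nat" where
  "tri 0 = 0"
| "tri (Suc n) = tri n + n"

lemma tri_2: "2 * tri n = n * (n - 1)"
proof (induction n)
  case (Suc n) then show ?case by (cases n) (simp_all add: algebra_simps)
qed simp

fun qb :: "nat \<Rightarrow> nat \<Rightarrow> nat \<Rightarrow> bit fps" where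
  "qb d 0 k = (if k = 0 then 1 else 0)"
| "qb d (Suc m) k = qb d m k + (if k = 0 then 0 else XX ^ (d * (Suc m - k)) * qb d m (k - 1))"

lemma qb_zero [simp]: "k > m \<Longrightarrow> qb d m k = 0"
  by (induction m arbitrary: k) auto

lemma qb_0 [simp]: "qb d m 0 = 1"
  by (induction m) auto

lemma qb_diag [simp]: "qb d m m = 1"
  by (induction m) auto

lemma rothe:
  "(\<Prod>i<m. y + z * XX ^ (d * i)) = (\<Sum>k\<le>m. qb d m k * XX ^ (d * tri k) * z ^ k * y ^ (m - k))"
proof (induction m)
  case 0 then show ?case by simp
next
  case (Suc m)
  define a where "a k = qb d m k * XX ^ (d * tri k) * z ^ k" for k
  have "(\<Prod>i<Suc m. y + z * XX ^ (d * i)) = (\<Sum>k\<le>m. a k * y ^ (m - k)) * (y + z * XX ^ (d * m))"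
    by (simp add: Suc a_def)
  also have "\<dots> = (\<Sum>k\<le>m. a k * y ^ (m - k) * y) + (\<Sum>k\<le>m. a k * y ^ (m - k) * z * XX ^ (d * m))"
    by (simp add: distrib_left sum_distrib_right mult.assoc)
  also have "(\<Sum>k\<le>m. a k * y ^ (m - k) * y) = (\<Sum>k\<le>m. a k * y ^ (Suc m - k))"
    by (rule sum.cong) (simp_all add: Suc_diff_le power_Suc2 mult.assoc)
  also have "(\<Sum>k\<le>m. a k * y ^ (Suc m - k)) = (\<Sum>k\<le>Suc m. qb d m k * XX ^ (d * tri k) * z ^ k * y ^ (Suc m - k))"
    by (simp add: a_def)
  also have "(\<Sum>k\<le>m. a k * y ^ (m - k) * z * XX ^ (d * m)) =
      (\<Sum>k\<le>Suc m. (if k = 0 then 0 else XX ^ (d * (Suc m - k)) * qb d m (k - 1)) * XX ^ (d * tri k) * z ^ k * y ^ (Suc m - k))"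
  proof -
    have "(\<Sum>k\<le>Suc m. (if k = 0 then 0 else XX ^ (d * (Suc m - k)) * qb d m (k - 1)) * XX ^ (d * tri k) * z ^ k * y ^ (Suc m - k))
       = (\<Sum>k\<le>m. XX ^ (d * (m - k)) * qb d m k * XX ^ (d * tri (Suc k)) * z ^ Suc k * y ^ (m - k))"
      by (subst sum.atMost_Suc_shift) simp
    also have "\<dots> = (\<Sum>k\<le>m. a k * y ^ (m - k) * z * XX ^ (d * m))"
    proof (rule sum.cong)
      fix k assume "k \<in> {..m}"
      then have "(m - k) + tri (Suc k) = tri k + m" by simp
      then have "d * (m - k) + d * tri (Suc k) = d * tri k + d * m"
        by (metis distrib_left)
      then have "XX ^ (d * (m - k)) * XX ^ (d * tri (Suc k)) = XX ^ (d * tri k) * XX ^ (d * m)"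
        by (simp add: power_add[symmetric])
      then show "XX ^ (d * (m - k)) * qb d m k * XX ^ (d * tri (Suc k)) * z ^ Suc k * y ^ (m - k) =
          a k * y ^ (m - k) * z * XX ^ (d * m)"
        unfolding a_def by (simp add: algebra_simps)
    qed simp
    finally show ?thesis by simp
  qed
  also have "(\<Sum>k\<le>Suc m. qb d m k * XX ^ (d * tri k) * z ^ k * y ^ (Suc m - k)) +
      (\<Sum>k\<le>Suc m. (if k = 0 then 0 else XX ^ (d * (Suc m - k)) * qb d m (k - 1)) * XX ^ (d * tri k) * z ^ k * y ^ (Suc m - k))
      = (\<Sum>k\<le>Suc m. qb d (Suc m) k * XX ^ (d * tri k) * z ^ k * y ^ (Suc m - k))"
    by (simp add: sum.distrib[symmetric] distrib_right)
  finally show ?case .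
qed

lemma bit_pow_identity: "(1 + XX ^ a) + XX ^ a * (1 + XX ^ b) = 1 + XX ^ (a + b)"
proof -
  have "XX ^ a * (1 + XX ^ b) = XX ^ a + XX ^ (a + b)" by (simp add: distrib_left power_add)
  then have "(1 + XX ^ a) + XX ^ a * (1 + XX ^ b) = 1 + XX ^ (a + b) + (XX ^ a + XX ^ a)"
    by (simp only: add_ac)
  then show ?thesis by simp
qed

lemma qb_prod: "k \<le> m \<Longrightarrow> qb d m k * E d d k * E d d (m - k) = E d d m"
proof (induction m arbitrary: k)
  case 0 then show ?case by simp
next
  case (Suc m k)
  show ?case
  proof (cases "k = 0 \<or> k = Suc m")
    case True then show ?thesis by auto
  next
    case False
    then have k: "0 < k" "k \<le> m" using Suc.prems by auto
    define a where "a = d * (Suc m - k)"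
    have e1: "E d d (Suc m - k) = E d d (m - k) * (1 + XX ^ a)"
      using k by (simp add: a_def Suc_diff_le E_Suc algebra_simps)
    have e2: "E d d k = E d d (k - 1) * (1 + XX ^ (d * k))"
      using k E_Suc[of d d "k - 1"] by (simp add: algebra_simps)
    have mk: "m - (k - 1) = Suc m - k" using k by simp
    have IH1: "qb d m k * E d d k * E d d (m - k) = E d d m" using Suc.IH k by simp
    have IH2: "qb d m (k - 1) * E d d (k - 1) * E d d (Suc m - k) = E d d m"
      using Suc.IH[of "k - 1"] k mk by simp
    have "qb d (Suc m) k * E d d k * E d d (Suc m - k) =
        qb d m k * E d d k * E d d (Suc m - k) + XX ^ a * (qb d m (k - 1) * E d d k * E d d (Suc m - k))"
      using k by (simp add: a_def algebra_simps)
    also have "qb d m k * E d d k * E d d (Suc m - k) = E d d m * (1 + XX ^ a)"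
      using IH1 e1 by (simp add: mult.assoc)
    also have "qb d m (k - 1) * E d d k * E d d (Suc m - k) = E d d m * (1 + XX ^ (d * k))"
      using IH2 e2 by (simp add: algebra_simps)
    also have "E d d m * (1 + XX ^ a) + XX ^ a * (E d d m * (1 + XX ^ (d * k)))
        = E d d m * ((1 + XX ^ a) + XX ^ a * (1 + XX ^ (d * k)))"
      by (simp add: algebra_simps)
    also have "\<dots> = E d d m * (1 + XX ^ (a + d * k))" by (simp only: bit_pow_identity)
    also have "a + d * k = d + d * m"
    proof -
      have "Suc m - k + k = Suc m" using k by simp
      then have "d * (Suc m - k) + d * k = d * Suc m" by (metis distrib_left)
      then show ?thesis by (simp add: a_def)
    qed
    finally show ?thesis by (simp add: E_Suc)
  qed
qed

lemma qb_formula: "d > 0 \<Longrightarrow> k \<le> m \<Longrightarrow>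
    qb d m k = E d d m * inverse (E d d k) * inverse (E d d (m - k))"
proof -
  assume d: "d > 0" and k: "k \<le> m"
  have P: "(E d d k * E d d (m - k)) * (inverse (E d d k) * inverse (E d d (m - k))) = 1"
    using d by (simp add: fps_inverse_mult[symmetric] inverse_mult_eq_1')
  have "qb d m k = qb d m k * ((E d d k * E d d (m - k)) * (inverse (E d d k) * inverse (E d d (m - k))))"
    by (simp only: P mult_1_right)
  also have "\<dots> = (qb d m k * E d d k * E d d (m - k)) * (inverse (E d d k) * inverse (E d d (m - k)))"
    by (simp only: mult.assoc)
  also have "\<dots> = E d d m * (inverse (E d d k) * inverse (E d d (m - k)))"
    by (simp only: qb_prod[OF k])
  finally show ?thesis by (simp only: mult.assoc)
qed

lemma qb_near_one:
  assumes d: "d > 0" and k: "k \<le> m" and N: "N \<ge> min k (m - k)"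
  shows "teq (d * (min k (m - k) + 1)) (qb d m k * E d d N) 1"
proof -
  define a where "a = min k (m - k)"
  define b where "b = max k (m - k)"
  define T where "T = d * (a + 1)"
  have ab: "E d d k * E d d (m - k) = E d d a * E d d b"
    by (cases "k \<le> m - k") (simp_all add: a_def b_def min_def max_def mult.commute)
  have "m \<ge> b" using k by (simp add: b_def)
  have h1: "teq T (E d d m) (E d d b)"
    by (rule E_trunc) (use k in \<open>auto simp: T_def a_def b_def min_def max_def\<close>)
  have h2: "teq T (E d d N) (E d d a)"
    by (rule E_trunc) (use N in \<open>auto simp: T_def a_def min_def\<close>)
  have qf: "qb d m k = E d d m * (inverse (E d d a) * inverse (E d d b))"
    using qb_formula[OF d k] ab by (simp add: fps_inverse_mult[symmetric] mult.assoc)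
  have "teq T (qb d m k * E d d N) (E d d b * (inverse (E d d a) * inverse (E d d b)) * E d d a)"
    unfolding qf by (intro teq_mult h1 h2 teq_refl)
  moreover have "E d d b * (inverse (E d d a) * inverse (E d d b)) * E d d a = 1"
  proof -
    have "E d d b * (inverse (E d d a) * inverse (E d d b)) * E d d a =
        (E d d b * inverse (E d d b)) * (inverse (E d d a) * E d d a)"
      by (simp only: ac_simps)
    also have "\<dots> = 1" using d by (simp add: inverse_mult_eq_1 inverse_mult_eq_1')
    finally show ?thesis .
  qed
  ultimately show ?thesis by (simp add: T_def a_def)
qed

lemma le_mult_pos: "0 < (d::nat) \<Longrightarrow> M \<le> d * M"
  by (cases d) auto

lemma teq_sum_restrict:
  assumes "finite B" "A \<subseteq> B" "\<And>x. x \<in> B - A \<Longrightarrow> teq M (f x) 0"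
  shows "teq M (\<Sum>x\<in>B. f x) (\<Sum>x\<in>A. f x)"
proof -
  have "(\<Sum>x\<in>B. f x) = (\<Sum>x\<in>B - A. f x) + (\<Sum>x\<in>A. f x)"
    using sum.subset_diff[OF assms(2,1)] by simp
  moreover have "teq M (\<Sum>x\<in>B - A. f x) (\<Sum>x\<in>B - A. (0::bit fps))"
    by (rule teq_sum) (use assms(3) in auto)
  ultimately show ?thesis using teq_add[of M "\<Sum>x\<in>B - A. f x" 0 "\<Sum>x\<in>A. f x" "\<Sum>x\<in>A. f x"]
    by simp
qed

lemma qb_trunc: "d > 0 \<Longrightarrow> k \<le> m \<Longrightarrow> teq (d * (m - k + 1)) (qb d m k) (inverse (E d d k))"
proof -
  assume d: "d > 0" and k: "k \<le> m"
  have "teq (d * (m - k + 1)) (E d d m) (E d d (m - k))"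
    by (rule E_trunc) (simp add: min_def algebra_simps)
  then have "teq (d * (m - k + 1)) (E d d m * inverse (E d d k) * inverse (E d d (m - k)))
      (E d d (m - k) * inverse (E d d k) * inverse (E d d (m - k)))"
    by (intro teq_mult teq_refl)
  moreover have "E d d (m - k) * inverse (E d d k) * inverse (E d d (m - k)) = inverse (E d d k)"
  proof -
    have "E d d (m - k) * inverse (E d d k) * inverse (E d d (m - k)) =
        (E d d (m - k) * inverse (E d d (m - k))) * inverse (E d d k)"
      by (simp only: ac_simps)
    also have "\<dots> = inverse (E d d k)" using d by (simp add: inverse_mult_eq_1')
    finally show ?thesis .
  qed
  ultimately show ?thesis using qb_formula[OF d k] by simp
qed

lemma E_as_prod: "E c d m = (\<Prod>i<m. 1 + XX ^ c * XX ^ (d * i))"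
  by (simp add: E_def power_add)

lemma euler:
  assumes c: "c > 0" and d: "d > 0"
  shows "teq M (E c d M) (\<Sum>k<M. XX ^ (c * k + d * tri k) * inverse (E d d k))"
proof -
  have r: "E c d (2 * M) = (\<Sum>k\<le>2 * M. qb d (2 * M) k * XX ^ (d * tri k) * (XX ^ c) ^ k)"
    using rothe[of 1 "XX ^ c" d "2 * M"] by (simp add: E_as_prod)
  have "teq M (E c d M) (E c d (2 * M))"
  proof (rule E_trunc)
    have "M \<le> c + d * M" using le_mult_pos[OF d, of M] by linarith
    then show "M \<le> c + d * min (2 * M) M" by (simp add: min_def)
  qed
  also note r
  also have "teq M (\<Sum>k\<le>2 * M. qb d (2 * M) k * XX ^ (d * tri k) * (XX ^ c) ^ k)
      (\<Sum>k<M. qb d (2 * M) k * XX ^ (d * tri k) * (XX ^ c) ^ k)"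
  proof (rule teq_sum_restrict)
    fix k assume "k \<in> {..2 * M} - {..<M}"
    then have "k \<ge> M" by auto
    then have "c * k \<ge> M" using le_mult_pos[OF c, of k] by linarith
    then have "teq M (XX ^ (c * k) * (qb d (2 * M) k * XX ^ (d * tri k))) 0" by (rule teq_Xpow)
    then show "teq M (qb d (2 * M) k * XX ^ (d * tri k) * (XX ^ c) ^ k) 0"
      by (simp add: power_mult ac_simps)
  qed auto
  also have "teq M (\<Sum>k<M. qb d (2 * M) k * XX ^ (d * tri k) * (XX ^ c) ^ k)
      (\<Sum>k<M. XX ^ (c * k + d * tri k) * inverse (E d d k))"
  proof (rule teq_sum)
    fix k assume k: "k \<in> {..<M}"
    have "teq (d * (2 * M - k + 1)) (qb d (2 * M) k) (inverse (E d d k))"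
      by (rule qb_trunc) (use d k in auto)
    then have "teq M (qb d (2 * M) k) (inverse (E d d k))"
    proof (rule teq_mono)
      have "M \<le> 2 * M - k + 1" using k by auto
      then show "M \<le> d * (2 * M - k + 1)" using le_mult_pos[OF d, of "2 * M - k + 1"] by linarith
    qed
    then have "teq M (qb d (2 * M) k * XX ^ (c * k + d * tri k)) (inverse (E d d k) * XX ^ (c * k + d * tri k))"
      by (intro teq_mult teq_refl)
    then show "teq M (qb d (2 * M) k * XX ^ (d * tri k) * (XX ^ c) ^ k) (XX ^ (c * k + d * tri k) * inverse (E d d k))"
      by (simp add: power_mult[symmetric] power_add ac_simps)
  qed
  finally show ?thesis .
qed

lemma E_split: "E c d (2 * n) = E c (2 * d) n * E (c + d) (2 * d) n"
proof (induction n)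
  case 0 then show ?case by simp
next
  case (Suc n)
  have "E c d (2 * Suc n) = E c d (2 * n) * (1 + XX ^ (c + d * (2 * n))) * (1 + XX ^ (c + d * Suc (2 * n)))"
    by (simp add: E_Suc)
  also have "\<dots> = E c (2 * d) n * E (c + d) (2 * d) n * (1 + XX ^ (c + 2 * d * n)) * (1 + XX ^ (c + d + 2 * d * n))"
  proof -
    have x1: "c + d * (2 * n) = c + 2 * d * n" by simp
    have x2: "c + d * Suc (2 * n) = c + d + 2 * d * n" by simp
    show ?thesis by (simp only: Suc x1 x2)
  qed
  also have "\<dots> = (E c (2 * d) n * (1 + XX ^ (c + 2 * d * n))) * (E (c + d) (2 * d) n * (1 + XX ^ (c + d + 2 * d * n)))"
    by (simp only: ac_simps)
  finally show ?case by (simp add: E_Suc)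
qed

lemma tri4: "4 * tri i + 2 * i = 2 * i ^ 2"
proof -
  have "4 * tri i = 2 * (i * (i - 1))" using tri_2[of i] by simp
  then show ?thesis by (cases i) (simp_all add: power2_eq_square algebra_simps)
qed

lemma inv_cancel: "c > 0 \<Longrightarrow> E c d n * inverse (E c d n) = 1"
  by (simp add: inverse_mult_eq_1')

definition gS :: "nat \<Rightarrow> nat \<Rightarrow> bit fps" where
  "gS i k = XX ^ (2 * (i + k) ^ 2 + 2 * i ^ 2) * inverse (E 4 4 i) * inverse (E 4 4 k)"

lemma S2_lhs_term: "XX ^ (2 * j ^ 2) * E 2 4 j * inverse (E 4 4 j) = (\<Sum>i\<le>j. gS i (j - i))"
proof -
  have r: "E 2 4 j = (\<Sum>i\<le>j. qb 4 j i * XX ^ (4 * tri i) * (XX ^ 2) ^ i)"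
    using rothe[of 1 "XX ^ 2" 4 j] by (simp add: E_as_prod)
  have "XX ^ (2 * j ^ 2) * E 2 4 j * inverse (E 4 4 j) =
      (\<Sum>i\<le>j. XX ^ (2 * j ^ 2) * (qb 4 j i * XX ^ (4 * tri i) * (XX ^ 2) ^ i) * inverse (E 4 4 j))"
    unfolding r by (simp add: sum_distrib_left sum_distrib_right)
  also have "\<dots> = (\<Sum>i\<le>j. gS i (j - i))"
  proof (rule sum.cong)
    fix i assume i: "i \<in> {..j}"
    have q: "qb 4 j i * inverse (E 4 4 j) = inverse (E 4 4 i) * inverse (E 4 4 (j - i))"
    proof -
      have "qb 4 j i * inverse (E 4 4 j) = (E 4 4 j * inverse (E 4 4 j)) * (inverse (E 4 4 i) * inverse (E 4 4 (j - i)))"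
        using qb_formula[of 4 i j] i by (simp add: ac_simps)
      then show ?thesis by (simp add: inv_cancel)
    qed
    have ex: "2 * j ^ 2 + (4 * tri i + 2 * i) = 2 * (i + (j - i)) ^ 2 + 2 * i ^ 2"
      using i by (simp add: tri4)
    have "XX ^ (2 * j ^ 2) * (qb 4 j i * XX ^ (4 * tri i) * (XX ^ 2) ^ i) * inverse (E 4 4 j)
        = XX ^ (2 * j ^ 2 + (4 * tri i + 2 * i)) * (qb 4 j i * inverse (E 4 4 j))"
      by (simp add: power_add power_mult[symmetric] ac_simps)
    also have "\<dots> = gS i (j - i)"
      unfolding q ex gS_def by (simp add: ac_simps)
    finally show "XX ^ (2 * j ^ 2) * (qb 4 j i * XX ^ (4 * tri i) * (XX ^ 2) ^ i) * inverse (E 4 4 j) = gS i (j - i)" .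
  qed simp
  finally show ?thesis .
qed

lemma S2_lhs: "(\<Sum>j<M. XX ^ (2 * j ^ 2) * E 2 4 j * inverse (E 4 4 j)) = (\<Sum>(i, k)\<in>{(i, k). i + k < M}. gS i k)"
  by (simp add: S2_lhs_term sum.triangle_reindex)

lemma S2_rhs_term:
  assumes n: "n < M"
  shows "teq M (E 2 4 M * (XX ^ (4 * n ^ 2) * inverse (E 2 2 (2 * n)))) (\<Sum>k<M. gS n k)"
proof -
  have e1: "E 2 2 (2 * n) = E 2 4 n * E 4 4 n" using E_split[of 2 2 n] by simp
  have e2: "E 2 4 M = E 2 4 n * E (2 + 4 * n) 4 (M - n)" using E_add[of 2 4 n "M - n"] n by simp
  have "E 2 4 M * (XX ^ (4 * n ^ 2) * inverse (E 2 2 (2 * n))) =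
      (E 2 4 n * inverse (E 2 4 n)) * (XX ^ (4 * n ^ 2) * E (2 + 4 * n) 4 (M - n) * inverse (E 4 4 n))"
    unfolding e1 e2 by (simp add: fps_inverse_mult ac_simps)
  also have "\<dots> = XX ^ (4 * n ^ 2) * E (2 + 4 * n) 4 (M - n) * inverse (E 4 4 n)"
    by (simp add: inv_cancel)
  finally have eq: "E 2 4 M * (XX ^ (4 * n ^ 2) * inverse (E 2 2 (2 * n))) =
      XX ^ (4 * n ^ 2) * E (2 + 4 * n) 4 (M - n) * inverse (E 4 4 n)" .
  have t1: "teq M (E (2 + 4 * n) 4 (M - n)) (E (2 + 4 * n) 4 M)"
  proof (rule E_trunc)
    have "M \<le> 2 + 4 * n + 4 * (M - n)" using n by arith
    then show "M \<le> 2 + 4 * n + 4 * min M (M - n)" by (simp add: min_def)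
  qed
  have t2: "teq M (E (2 + 4 * n) 4 M) (\<Sum>k<M. XX ^ ((2 + 4 * n) * k + 4 * tri k) * inverse (E 4 4 k))"
    by (rule euler) simp_all
  have "teq M (XX ^ (4 * n ^ 2) * E (2 + 4 * n) 4 (M - n) * inverse (E 4 4 n))
      (XX ^ (4 * n ^ 2) * (\<Sum>k<M. XX ^ ((2 + 4 * n) * k + 4 * tri k) * inverse (E 4 4 k)) * inverse (E 4 4 n))"
    by (intro teq_mult teq_refl teq_trans[OF t1 t2])
  also have "XX ^ (4 * n ^ 2) * (\<Sum>k<M. XX ^ ((2 + 4 * n) * k + 4 * tri k) * inverse (E 4 4 k)) * inverse (E 4 4 n)
      = (\<Sum>k<M. gS n k)"
    unfolding sum_distrib_left sum_distrib_right
  proof (rule sum.cong)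
    fix k
    have ex: "4 * n ^ 2 + ((2 + 4 * n) * k + 4 * tri k) = 2 * (n + k) ^ 2 + 2 * n ^ 2"
    proof -
      have "(2 + 4 * n) * k + 4 * tri k = 4 * n * k + (4 * tri k + 2 * k)" by (simp add: algebra_simps)
      also have "\<dots> = 4 * n * k + 2 * k ^ 2" by (simp add: tri4)
      finally show ?thesis by (simp add: power2_eq_square algebra_simps)
    qed
    show "XX ^ (4 * n ^ 2) * (XX ^ ((2 + 4 * n) * k + 4 * tri k) * inverse (E 4 4 k)) * inverse (E 4 4 n) = gS n k"
      unfolding gS_def ex[symmetric] by (simp add: power_add ac_simps)
  qed simp
  finally show ?thesis unfolding eq .
qed

lemma S2:
  "teq M (\<Sum>j<M. XX ^ (2 * j ^ 2) * E 2 4 j * inverse (E 4 4 j))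
     (E 2 4 M * (\<Sum>n<M. XX ^ (4 * n ^ 2) * inverse (E 2 2 (2 * n))))"
proof -
  have "teq M (E 2 4 M * (\<Sum>n<M. XX ^ (4 * n ^ 2) * inverse (E 2 2 (2 * n)))) (\<Sum>n<M. \<Sum>k<M. gS n k)"
    unfolding sum_distrib_left by (rule teq_sum) (rule S2_rhs_term, simp)
  also have "(\<Sum>n<M. \<Sum>k<M. gS n k) = (\<Sum>(i, k)\<in>{..<M} \<times> {..<M}. gS i k)"
    by (simp add: sum.cartesian_product)
  also have "teq M \<dots> (\<Sum>(i, k)\<in>{(i, k). i + k < M}. gS i k)"
  proof (rule teq_sum_restrict)
    fix p assume p: "p \<in> {..<M} \<times> {..<M} - {(i, k). i + k < M}"
    obtain i k where ik: "p = (i, k)" "i + k \<ge> M" using p by force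
    have "M \<le> i + k" using ik by simp
    also have "\<dots> \<le> (i + k) ^ 2" by (simp add: power2_eq_square)
    finally have "M \<le> 2 * (i + k) ^ 2 + 2 * i ^ 2" by linarith
    then have "teq M (XX ^ (2 * (i + k) ^ 2 + 2 * i ^ 2) * (inverse (E 4 4 i) * inverse (E 4 4 k))) 0"
      by (rule teq_Xpow)
    then show "teq M (case p of (i, k) \<Rightarrow> gS i k) 0" by (simp add: ik gS_def mult.assoc)
  qed auto
  finally have "teq M (E 2 4 M * (\<Sum>n<M. XX ^ (4 * n ^ 2) * inverse (E 2 2 (2 * n))))
     (\<Sum>j<M. XX ^ (2 * j ^ 2) * E 2 4 j * inverse (E 4 4 j))" by (simp only: S2_lhs)
  then show ?thesis by (rule teq_sym)
qed

definition Aser :: "nat \<Rightarrow> bit fps" where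
  "Aser M = (\<Sum>j<M. XX ^ (2 * j ^ 2) * E (4 + 4 * j) 4 M * inverse (E (2 + 4 * j) 4 M))"

lemma Aser_term:
  "teq M (XX ^ (2 * j ^ 2) * E (4 + 4 * j) 4 M * inverse (E (2 + 4 * j) 4 M))
     ((E 4 4 M * inverse (E 2 4 M)) * (XX ^ (2 * j ^ 2) * E 2 4 j * inverse (E 4 4 j)))"
proof -
  have a1: "E (4 + 4 * j) 4 M = inverse (E 4 4 j) * E 4 4 (j + M)"
  proof -
    have "E 4 4 (j + M) = E 4 4 j * E (4 + 4 * j) 4 M" by (rule E_add)
    then have "inverse (E 4 4 j) * E 4 4 (j + M) = (inverse (E 4 4 j) * E 4 4 j) * E (4 + 4 * j) 4 M"
      by (simp add: mult.assoc)
    then show ?thesis by (simp add: inverse_mult_eq_1)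
  qed
  have a2: "inverse (E (2 + 4 * j) 4 M) = E 2 4 j * inverse (E 2 4 (j + M))"
  proof -
    have "E 2 4 (j + M) = E 2 4 j * E (2 + 4 * j) 4 M" by (rule E_add)
    then have "E 2 4 j * inverse (E 2 4 (j + M)) = (E 2 4 j * inverse (E 2 4 j)) * inverse (E (2 + 4 * j) 4 M)"
      by (simp add: fps_inverse_mult mult.assoc)
    then show ?thesis by (simp add: inv_cancel)
  qed
  have t1: "teq M (E 4 4 (j + M)) (E 4 4 M)" by (rule E_trunc) (simp add: min_def)
  have t2: "teq M (inverse (E 2 4 (j + M))) (inverse (E 2 4 M))"
    by (rule teq_inverse) (rule E_trunc, simp_all add: min_def)
  have "XX ^ (2 * j ^ 2) * E (4 + 4 * j) 4 M * inverse (E (2 + 4 * j) 4 M) =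
      E 4 4 (j + M) * inverse (E 2 4 (j + M)) * (XX ^ (2 * j ^ 2) * E 2 4 j * inverse (E 4 4 j))"
    unfolding a1 a2 by (simp only: ac_simps)
  also have "teq M \<dots> ((E 4 4 M * inverse (E 2 4 M)) * (XX ^ (2 * j ^ 2) * E 2 4 j * inverse (E 4 4 j)))"
    by (intro teq_mult t1 t2 teq_refl)
  finally show ?thesis .
qed

lemma claim1: "teq M (Aser M) (E 4 4 M * (\<Sum>n<M. XX ^ (4 * n ^ 2) * inverse (E 2 2 (2 * n))))"
proof -
  have "teq M (Aser M) (\<Sum>j<M. (E 4 4 M * inverse (E 2 4 M)) * (XX ^ (2 * j ^ 2) * E 2 4 j * inverse (E 4 4 j)))"
    unfolding Aser_def by (rule teq_sum) (rule Aser_term)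
  also have "(\<Sum>j<M. (E 4 4 M * inverse (E 2 4 M)) * (XX ^ (2 * j ^ 2) * E 2 4 j * inverse (E 4 4 j)))
      = (E 4 4 M * inverse (E 2 4 M)) * (\<Sum>j<M. XX ^ (2 * j ^ 2) * E 2 4 j * inverse (E 4 4 j))"
    by (simp add: sum_distrib_left)
  also have "teq M \<dots> ((E 4 4 M * inverse (E 2 4 M)) * (E 2 4 M * (\<Sum>n<M. XX ^ (4 * n ^ 2) * inverse (E 2 2 (2 * n)))))"
    by (intro teq_mult teq_refl S2)
  also have "(E 4 4 M * inverse (E 2 4 M)) * (E 2 4 M * (\<Sum>n<M. XX ^ (4 * n ^ 2) * inverse (E 2 2 (2 * n))))
      = (E 2 4 M * inverse (E 2 4 M)) * (E 4 4 M * (\<Sum>n<M. XX ^ (4 * n ^ 2) * inverse (E 2 2 (2 * n))))"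
    by (simp only: ac_simps)
  also have "\<dots> = E 4 4 M * (\<Sum>n<M. XX ^ (4 * n ^ 2) * inverse (E 2 2 (2 * n)))"
    by (simp add: inv_cancel)
  finally show ?thesis .
qed

lemma tri_int: "2 * int (tri x) = int x * (int x - 1)"
proof -
  have "int (2 * tri x) = int (x * (x - 1))" by (simp only: tri_2)
  then show ?thesis by (cases x) (simp_all add: algebra_simps)
qed

lemma int2_cancel: "2 * (x::int) = 2 * y \<Longrightarrow> x = y"
  by simp

definition phi :: "nat \<Rightarrow> nat \<Rightarrow> nat" where
  "phi n k = (if k \<le> n then 2 * (n - k) else 2 * (k - n) - 1)"

lemma gauss_exp:
  assumes n: "n = Suc M" and a: "a = w * (4 * M + 3)" and k: "k \<le> 2 * n"
  shows "4 * w * tri k + a * (2 * n - k) = 4 * w * tri n + a * n + w * tri (Suc (phi n k))"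
proof (cases "k \<le> n")
  case True
  then obtain s where s: "n = k + s" by (metis le_add_diff_inverse)
  have p: "phi n k = 2 * s" using True s by (simp add: phi_def)
  have d: "2 * n - k = k + 2 * s" using s by simp
  have "2 * int (4 * w * tri k + a * (k + 2 * s)) = 2 * int (4 * w * tri n + a * n + w * tri (Suc (2 * s)))"
  proof -
    have e1: "2 * int (tri k) = int k * (int k - 1)" by (rule tri_int)
    have e2: "2 * int (tri n) = int n * (int n - 1)" by (rule tri_int)
    have e3: "2 * int (tri (Suc (2 * s))) = int (Suc (2 * s)) * (int (Suc (2 * s)) - 1)" by (rule tri_int)
    have e4: "int a = int w * (4 * int M + 3)" using a by simp
    have e5: "int n = int M + 1" using n by simp
    have e6: "int n = int k + int s" using s by simp
    show ?thesis using e1 e2 e3 e4 e5 e6 by (simp add: algebra_simps) algebra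
  qed
  then have "int (4 * w * tri k + a * (k + 2 * s)) = int (4 * w * tri n + a * n + w * tri (Suc (2 * s)))"
    by (rule int2_cancel)
  then have "4 * w * tri k + a * (k + 2 * s) = 4 * w * tri n + a * n + w * tri (Suc (2 * s))"
    by (simp only: of_nat_eq_iff)
  then show ?thesis using p d by simp
next
  case False
  define t where "t = k - n"
  have t: "k = n + t" "t \<ge> 1" using False by (simp_all add: t_def)
  have "t \<le> n" using t k by simp
  then obtain r where r: "n = t + r" by (metis le_add_diff_inverse)
  have p: "phi n k = 2 * t - 1" using False t by (simp add: phi_def)
  have p': "Suc (2 * t - 1) = 2 * t" using t by simp
  have d: "2 * n - k = r" using t r by simp
  have "2 * int (4 * w * tri k + a * r) = 2 * int (4 * w * tri n + a * n + w * tri (2 * t))"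
  proof -
    have e1: "2 * int (tri k) = int k * (int k - 1)" by (rule tri_int)
    have e2: "2 * int (tri n) = int n * (int n - 1)" by (rule tri_int)
    have e3: "2 * int (tri (2 * t)) = int (2 * t) * (int (2 * t) - 1)" by (rule tri_int)
    have e4: "int a = int w * (4 * int M + 3)" using a by simp
    have e5: "int n = int M + 1" using n by simp
    have e6: "int n = int t + int r" using r by simp
    have e7: "int k = int n + int t" using t by simp
    show ?thesis using e1 e2 e3 e4 e5 e6 e7 by (simp add: algebra_simps) algebra
  qed
  then have "int (4 * w * tri k + a * r) = int (4 * w * tri n + a * n + w * tri (2 * t))"
    by (rule int2_cancel)
  then have "4 * w * tri k + a * r = 4 * w * tri n + a * n + w * tri (2 * t)"
    by (simp only: of_nat_eq_iff)
  then show ?thesis using p p' d by simp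
qed

lemma prod_lessThan_add: "(\<Prod>i<m + n. f i) = (\<Prod>i<m. f i) * (\<Prod>i<n. f (m + i))" for f :: "nat \<Rightarrow> bit fps"
  by (induction n) (simp_all add: mult.assoc)

lemma sum_lessThan_id: "(\<Sum>i<n. i) = tri n"
  by (induction n) simp_all

lemma XX_cancel: "XX ^ c * f = XX ^ c * g \<Longrightarrow> f = g"
proof (rule fps_ext)
  fix i assume "XX ^ c * f = XX ^ c * g"
  then have "(XX ^ c * f) $ (i + c) = (XX ^ c * g) $ (i + c)" by simp
  then show "f $ i = g $ i" by (simp add: fps_X_power_mult_nth)
qed

lemma gauss_fin:
  assumes n: "n = Suc M"
  shows "E (3 * w) (4 * w) n * E w (4 * w) n = (\<Sum>k\<le>2 * n. qb (4 * w) (2 * n) k * XX ^ (w * tri (Suc (phi n k))))"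
proof -
  define a where "a = w * (4 * M + 3)"
  define c0 where "c0 = 4 * w * tri n + a * n"
  define f where "f i = XX ^ a + XX ^ (4 * w * i)" for i
  have r: "(\<Prod>i<2 * n. f i) = (\<Sum>k\<le>2 * n. qb (4 * w) (2 * n) k * XX ^ (4 * w * tri k) * 1 ^ k * (XX ^ a) ^ (2 * n - k))"
    using rothe[of "XX ^ a" 1 "4 * w" "2 * n"] by (simp add: f_def)
  have rhs: "(\<Sum>k\<le>2 * n. qb (4 * w) (2 * n) k * XX ^ (4 * w * tri k) * 1 ^ k * (XX ^ a) ^ (2 * n - k))
      = XX ^ c0 * (\<Sum>k\<le>2 * n. qb (4 * w) (2 * n) k * XX ^ (w * tri (Suc (phi n k))))"
    unfolding sum_distrib_left
  proof (rule sum.cong)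
    fix k assume k: "k \<in> {..2 * n}"
    have "4 * w * tri k + a * (2 * n - k) = c0 + w * tri (Suc (phi n k))"
      using gauss_exp[OF n a_def, of k] k by (simp add: c0_def)
    then show "qb (4 * w) (2 * n) k * XX ^ (4 * w * tri k) * 1 ^ k * (XX ^ a) ^ (2 * n - k) =
        XX ^ c0 * (qb (4 * w) (2 * n) k * XX ^ (w * tri (Suc (phi n k))))"
      by (simp add: power_mult[symmetric] power_add[symmetric] ac_simps)
  qed simp
  have p1: "(\<Prod>i<n. f i) = XX ^ (4 * w * tri n) * E (3 * w) (4 * w) n"
  proof -
    have "(\<Prod>i<n. f i) = (\<Prod>l<n. f (n - Suc l))"
      by (rule sum.nat_diff_reindex[symmetric, THEN trans, OF refl] prod.nat_diff_reindex[symmetric])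
    also have "\<dots> = (\<Prod>l<n. XX ^ (4 * w * (n - Suc l)) * (1 + XX ^ (3 * w + 4 * w * l)))"
    proof (rule prod.cong)
      fix l assume l: "l \<in> {..<n}"
      have e: "a = 4 * w * (n - Suc l) + (3 * w + 4 * w * l)"
      proof -
        have "n - Suc l + l = M" using l n by auto
        then have "4 * w * (n - Suc l) + 4 * w * l = 4 * w * M" by (metis distrib_left)
        then show ?thesis by (simp add: a_def algebra_simps)
      qed
      show "f (n - Suc l) = XX ^ (4 * w * (n - Suc l)) * (1 + XX ^ (3 * w + 4 * w * l))"
        unfolding f_def e by (simp add: power_add distrib_left add.commute)
    qed simp
    also have "\<dots> = (\<Prod>l<n. XX ^ (4 * w * (n - Suc l))) * E (3 * w) (4 * w) n"
      by (simp add: prod.distrib E_def)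
    also have "(\<Prod>l<n. XX ^ (4 * w * (n - Suc l))) = (\<Prod>i<n. XX ^ (4 * w * i))"
      by (rule prod.nat_diff_reindex)
    also have "\<dots> = XX ^ (4 * w * tri n)"
      by (simp add: power_sum[symmetric] sum_distrib_left[symmetric] sum_lessThan_id)
    finally show ?thesis .
  qed
  have p2: "(\<Prod>l<n. f (n + l)) = XX ^ (a * n) * E w (4 * w) n"
  proof -
    have "(\<Prod>l<n. f (n + l)) = (\<Prod>l<n. XX ^ a * (1 + XX ^ (w + 4 * w * l)))"
    proof (rule prod.cong)
      fix l
      have e: "4 * w * (n + l) = a + (w + 4 * w * l)" by (simp add: a_def n algebra_simps)
      show "f (n + l) = XX ^ a * (1 + XX ^ (w + 4 * w * l))"
        unfolding f_def e by (simp add: power_add distrib_left)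
    qed simp
    also have "\<dots> = XX ^ (a * n) * E w (4 * w) n"
      by (simp add: prod.distrib E_def power_mult)
    finally show ?thesis .
  qed
  have "(\<Prod>i<2 * n. f i) = (\<Prod>i<n. f i) * (\<Prod>l<n. f (n + l))"
    using prod_lessThan_add[of f n n] by (simp add: mult_2)
  also have "\<dots> = XX ^ c0 * (E (3 * w) (4 * w) n * E w (4 * w) n)"
    unfolding p1 p2 c0_def by (simp add: power_add ac_simps)
  finally have "XX ^ c0 * (E (3 * w) (4 * w) n * E w (4 * w) n) =
      XX ^ c0 * (\<Sum>k\<le>2 * n. qb (4 * w) (2 * n) k * XX ^ (w * tri (Suc (phi n k))))"
    using r rhs by simp
  then show ?thesis by (rule XX_cancel)
qed

lemma tri_mono: "m \<le> m' \<Longrightarrow> tri m \<le> tri m'"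
proof (induction m')
  case (Suc m') then show ?case by (cases "m = Suc m'") auto
qed simp

lemma tri_Suc_less: "m < m' \<Longrightarrow> tri (Suc m) < tri (Suc m')"
proof -
  assume "m < m'"
  then have "tri (Suc m) \<le> tri m'" by (intro tri_mono) simp
  then show ?thesis using \<open>m < m'\<close> by simp
qed

lemma tri_Suc_inj: "tri (Suc m) = tri (Suc m') \<Longrightarrow> m = m'"
  by (metis linorder_neqE_nat tri_Suc_less less_irrefl)

lemma tri_Suc_ge: "m \<le> tri (Suc m)"
  by simp

definition G :: "nat \<Rightarrow> bit fps" where
  "G w = Abs_fps (\<lambda>i. if \<exists>m. i = w * tri (Suc m) then 1 else 0)"

definition psi :: "nat \<Rightarrow> nat \<Rightarrow> nat" where
  "psi n m = (if even m then n - m div 2 else n + (m + 1) div 2)"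

lemma phi_reindex: "(\<Sum>k\<le>2 * n. g (phi n k)) = (\<Sum>m\<le>2 * n. (g m :: bit fps))"
proof (rule sum.reindex_bij_witness[where i = "psi n" and j = "phi n"])
  fix k assume "k \<in> {..2 * n}"
  then show "psi n (phi n k) = k" "phi n k \<in> {..2 * n}"
    by (auto simp: phi_def psi_def)
next
  fix m assume m: "m \<in> {..2 * n}"
  show "phi n (psi n m) = m"
  proof (cases "even m")
    case True then show ?thesis using m by (auto simp: phi_def psi_def elim!: evenE)
  next
    case False then show ?thesis using m by (auto simp: phi_def psi_def elim!: oddE)
  qed
  show "psi n m \<in> {..2 * n}"
    using m by (auto simp: psi_def elim!: oddE)
qed simp

lemma G_trunc:
  assumes w: "w > 0" and n: "M \<le> n"
  shows "teq M (\<Sum>m\<le>2 * n. XX ^ (w * tri (Suc m))) (G w)"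
  unfolding teq_def
proof (intro allI impI)
  fix i assume i: "i < M"
  have c: "(\<Sum>m\<le>2 * n. XX ^ (w * tri (Suc m))) $ i = (\<Sum>m\<le>2 * n. if i = w * tri (Suc m) then 1 else 0)"
    by (simp add: fps_sum_nth)
  show "(\<Sum>m\<le>2 * n. XX ^ (w * tri (Suc m))) $ i = G w $ i"
  proof (cases "\<exists>m. i = w * tri (Suc m)")
    case True
    then obtain m0 where m0: "i = w * tri (Suc m0)" by blast
    have "m0 \<le> i" using m0 w tri_Suc_ge[of m0] le_mult_pos[OF w, of "tri (Suc m0)"] by linarith
    then have m0n: "m0 \<in> {..2 * n}" using i n by simp
    have "\<And>m. (i = w * tri (Suc m)) = (m = m0)"
    proof
      fix m assume "i = w * tri (Suc m)"
      then have eq: "w * tri (Suc m) = w * tri (Suc m0)" using m0 by metis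
      have wne: "w \<noteq> 0" using w by simp
      have "tri (Suc m) = tri (Suc m0)" using mult_left_cancel[OF wne] eq by blast
      then show "m = m0" by (rule tri_Suc_inj)
    next
      fix m assume "m = m0" then show "i = w * tri (Suc m)" using m0 by simp
    qed
    then have "(\<Sum>m\<le>2 * n. if i = w * tri (Suc m) then 1 else (0::bit)) = (\<Sum>m\<le>2 * n. if m = m0 then 1 else 0)"
      by simp
    also have "\<dots> = 1" using m0n by simp
    finally show ?thesis using c True by (simp add: G_def)
  next
    case False
    then show ?thesis using c by (simp add: G_def)
  qed
qed

lemma gauss_arith:
  assumes n: "n = Suc M" and w: "w > 0" and k: "k \<le> 2 * n" and lt: "w * tri (Suc (phi n k)) < M"
  shows "M \<le> 4 * w * (min k (2 * n - k) + 1)"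
proof -
  define p where "p = phi n k"
  have "p \<le> tri (Suc p)" by simp
  also have "\<dots> \<le> w * tri (Suc p)" using le_mult_pos[OF w] by simp
  finally have pM: "p < M" using lt p_def by simp
  define q where "q = min k (2 * n - k)"
  have key: "2 * q + p + 1 \<ge> 2 * n"
    using k by (auto simp: q_def p_def phi_def min_def)
  have "q + 1 \<le> w * (q + 1)" by (rule le_mult_pos[OF w])
  then have "4 * (q + 1) \<le> 4 * w * (q + 1)" by simp
  moreover have "M \<le> 4 * (q + 1)" using key pM n by arith
  ultimately have "M \<le> 4 * w * (q + 1)" by (rule order_trans[rotated])
  then show ?thesis by (simp add: q_def)
qed

lemma gauss:
  assumes w: "w > 0"
  shows "teq M (E (4 * w) (4 * w) M * E w (2 * w) M) (G w)"
proof -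
  define n where "n = Suc M"
  have t1: "teq M (E w (2 * w) M) (E w (2 * w) (2 * n))"
  proof (rule E_trunc)
    have a: "M \<le> w * M" by (rule le_mult_pos[OF w])
    have b: "min (2 * n) M = M" by (simp add: n_def)
    show "M \<le> w + 2 * w * min (2 * n) M" unfolding b using a by linarith
  qed
  have s: "E w (2 * w) (2 * n) = (\<Sum>k\<le>2 * n. qb (4 * w) (2 * n) k * XX ^ (w * tri (Suc (phi n k))))"
  proof -
    have "E w (2 * w) (2 * n) = E w (4 * w) n * E (3 * w) (4 * w) n"
      using E_split[of w "2 * w" n] by (simp add: algebra_simps)
    then show ?thesis using gauss_fin[OF n_def, of w] by (simp add: mult.commute)
  qed
  have "teq M (E (4 * w) (4 * w) M * E w (2 * w) M) (E (4 * w) (4 * w) M * E w (2 * w) (2 * n))"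
    by (intro teq_mult teq_refl t1)
  also have "E (4 * w) (4 * w) M * E w (2 * w) (2 * n) =
      (\<Sum>k\<le>2 * n. E (4 * w) (4 * w) M * qb (4 * w) (2 * n) k * XX ^ (w * tri (Suc (phi n k))))"
    unfolding s sum_distrib_left by (simp add: mult.assoc)
  also have "teq M \<dots> (\<Sum>k\<le>2 * n. XX ^ (w * tri (Suc (phi n k))))"
  proof (rule teq_sum)
    fix k assume k: "k \<in> {..2 * n}"
    show "teq M (E (4 * w) (4 * w) M * qb (4 * w) (2 * n) k * XX ^ (w * tri (Suc (phi n k)))) (XX ^ (w * tri (Suc (phi n k))))"
    proof (cases "w * tri (Suc (phi n k)) < M")
      case False
      then have h1: "teq M (XX ^ (w * tri (Suc (phi n k))) * (E (4 * w) (4 * w) M * qb (4 * w) (2 * n) k)) 0"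
        by (intro teq_Xpow) simp
      have h2: "teq M (XX ^ (w * tri (Suc (phi n k)))) 0"
        using False by (intro teq_Xpow') simp
      have "teq M (XX ^ (w * tri (Suc (phi n k))) * (E (4 * w) (4 * w) M * qb (4 * w) (2 * n) k))
          (XX ^ (w * tri (Suc (phi n k))))"
        using teq_trans[OF h1 teq_sym[OF h2]] .
      then show ?thesis by (simp only: ac_simps)
    next
      case True
      have w4: "4 * w > 0" using w by simp
      have "teq (4 * w * (min k (2 * n - k) + 1)) (qb (4 * w) (2 * n) k * E (4 * w) (4 * w) (2 * n)) 1"
        by (rule qb_near_one[OF w4]) (use k in auto)
      then have a: "teq M (qb (4 * w) (2 * n) k * E (4 * w) (4 * w) (2 * n)) 1"
        by (rule teq_mono) (rule gauss_arith[OF n_def w _ True], use k in simp)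
      have b: "teq M (E (4 * w) (4 * w) M) (E (4 * w) (4 * w) (2 * n))"
      proof (rule E_trunc)
        have a: "M \<le> 4 * w * M" by (rule le_mult_pos[OF w4])
        have b: "min (2 * n) M = M" by (simp add: n_def)
        show "M \<le> 4 * w + 4 * w * min (2 * n) M" unfolding b using a by linarith
      qed
      have "teq M (qb (4 * w) (2 * n) k * E (4 * w) (4 * w) M) 1"
        using teq_trans[OF teq_mult[OF teq_refl b] a] .
      then have "teq M (qb (4 * w) (2 * n) k * E (4 * w) (4 * w) M * XX ^ (w * tri (Suc (phi n k))))
          (1 * XX ^ (w * tri (Suc (phi n k))))"
        by (intro teq_mult teq_refl)
      then show ?thesis by (simp add: ac_simps)
    qed
  qed
  also have "(\<Sum>k\<le>2 * n. XX ^ (w * tri (Suc (phi n k)))) = (\<Sum>m\<le>2 * n. XX ^ (w * tri (Suc m)))"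
    by (rule phi_reindex)
  also have "teq M \<dots> (G w)"
    by (rule G_trunc[OF w]) (simp add: n_def)
  finally show ?thesis .
qed

definition evs :: "bit fps \<Rightarrow> bool" where "evs f \<longleftrightarrow> (\<forall>i. odd i \<longrightarrow> f $ i = 0)"
definition ods :: "bit fps \<Rightarrow> bool" where "ods f \<longleftrightarrow> (\<forall>i. even i \<longrightarrow> f $ i = 0)"

lemma evs_mult: "evs f \<Longrightarrow> evs g \<Longrightarrow> evs (f * g)"
  unfolding evs_def
proof (intro allI impI)
  fix i :: nat assume f: "\<forall>i. odd i \<longrightarrow> f $ i = 0" and g: "\<forall>i. odd i \<longrightarrow> g $ i = 0" and i: "odd i"
  show "(f * g) $ i = 0" unfolding fps_mult_nth
  proof (rule sum.neutral, intro ballI)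
    fix j assume j: "j \<in> {0..i}"
    show "f $ j * g $ (i - j) = 0"
    proof (cases "odd j")
      case True then show ?thesis using f by simp
    next
      case False then have "odd (i - j)" using i j by auto
      then show ?thesis using g by simp
    qed
  qed
qed

lemma evs_ods_mult: "evs f \<Longrightarrow> ods g \<Longrightarrow> ods (f * g)"
  unfolding evs_def ods_def
proof (intro allI impI)
  fix i :: nat assume f: "\<forall>i. odd i \<longrightarrow> f $ i = 0" and g: "\<forall>i. even i \<longrightarrow> g $ i = 0" and i: "even i"
  show "(f * g) $ i = 0" unfolding fps_mult_nth
  proof (rule sum.neutral, intro ballI)
    fix j assume j: "j \<in> {0..i}"
    show "f $ j * g $ (i - j) = 0"
    proof (cases "odd j")
      case True then show ?thesis using f by simp
    next
      case False then have "even (i - j)" using i j by auto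
      then show ?thesis using g by simp
    qed
  qed
qed

lemma evs_add: "evs f \<Longrightarrow> evs g \<Longrightarrow> evs (f + g)"
  by (simp add: evs_def)

lemma ods_sum: "(\<And>x. x \<in> A \<Longrightarrow> ods (f x)) \<Longrightarrow> ods (\<Sum>x\<in>A. f x)"
  by (simp add: ods_def fps_sum_nth)

lemma evs_1 [simp]: "evs 1"
  by (simp add: evs_def)

lemma evs_Xpow: "even a \<Longrightarrow> evs (XX ^ a)"
  by (auto simp: evs_def)

lemma ods_Xpow: "odd a \<Longrightarrow> ods (XX ^ a)"
  by (auto simp: ods_def)

lemma evs_E: "even c \<Longrightarrow> even d \<Longrightarrow> evs (E c d n)"
  by (induction n) (simp_all add: E_Suc evs_mult evs_add evs_Xpow)

lemma evs_ods_zero: "evs f \<Longrightarrow> ods f \<Longrightarrow> f = 0"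
  by (rule fps_ext) (auto simp: evs_def ods_def)

lemma evs_inverse:
  assumes f: "evs f" and f0: "f $ 0 \<noteq> 0"
  shows "evs (inverse f)"
proof -
  define g where "g = inverse f"
  define h where "h = Abs_fps (\<lambda>i. if even i then g $ i else 0)"
  define r where "r = Abs_fps (\<lambda>i. if odd i then g $ i else 0)"
  have gho: "g = h + r" by (rule fps_ext) (simp add: h_def r_def)
  have eh: "evs h" by (simp add: evs_def h_def)
  have oo: "ods r" by (simp add: ods_def r_def)
  have fg: "f * g = 1" using f0 by (simp add: g_def inverse_mult_eq_1')
  have "f * r = 1 + f * h"
  proof -
    have A: "f * h + f * r = 1" using fg gho by (simp add: distrib_left)
    have "f * r = (f * h + f * h) + f * r" by (simp only: fps_add_self add_0_left)
    also have "\<dots> = (f * h + f * r) + f * h" by (simp only: ac_simps)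
    also have "\<dots> = 1 + f * h" by (simp only: A)
    finally show ?thesis .
  qed
  then have "evs (f * r)" using evs_add[OF evs_1 evs_mult[OF f eh]] by simp
  moreover have "ods (f * r)" by (rule evs_ods_mult[OF f oo])
  ultimately have "f * r = 0" by (rule evs_ods_zero)
  then have "inverse f * f * r = 0" by (simp add: mult.assoc)
  then have "r = 0" using f0 by (simp add: inverse_mult_eq_1)
  then show ?thesis using eh gho by (simp add: g_def)
qed

lemma tri_sq: "m + 2 * tri m = m ^ 2"
  using tri_2[of m] by (cases m) (simp_all add: power2_eq_square algebra_simps)

lemma Aser_coeff:
  assumes NM: "2 * N < M"
  shows "Aser M $ (2 * N) = G 1 $ (2 * N)"
proof -
  define f where "f m = XX ^ (m ^ 2) * inverse (E 2 2 m)" for m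
  define Ev where "Ev = (\<Sum>n<M. XX ^ (4 * n ^ 2) * inverse (E 2 2 (2 * n)))"
  define A where "A = {..<M} \<inter> {m. even m}"
  define B where "B = {..<M} \<inter> - {m. even m}"
  have fin: "finite A" "finite B" by (simp_all add: A_def B_def)
  have split: "(\<Sum>m<M. f m) = (\<Sum>m\<in>A. f m) + (\<Sum>m\<in>B. f m)"
    using sum.If_cases[of "{..<M}" "\<lambda>m. even m" f f] by (simp add: A_def B_def)
  have Aimg: "A = (\<lambda>n. 2 * n) ` {n. 2 * n < M}"
    by (auto simp: A_def elim!: evenE)
  have sA: "(\<Sum>m\<in>A. f m) = (\<Sum>n\<in>{n. 2 * n < M}. XX ^ (4 * n ^ 2) * inverse (E 2 2 (2 * n)))"
    unfolding Aimg by (subst sum.reindex) (auto simp: inj_on_def f_def power_mult_distrib)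
  have tEv: "teq M Ev (\<Sum>m\<in>A. f m)"
    unfolding sA Ev_def
  proof (rule teq_sum_restrict)
    fix n assume n: "n \<in> {..<M} - {n. 2 * n < M}"
    then have "M \<le> 2 * n" by simp
    moreover have "n \<ge> 1" using n NM by (cases n) auto
    moreover have "2 * n \<le> (2 * n) * (2 * n)" by (rule le_mult_pos) (use \<open>n \<ge> 1\<close> in simp)
    moreover have "4 * n ^ 2 = (2 * n) * (2 * n)" by (simp add: power2_eq_square)
    ultimately have "M \<le> 4 * n ^ 2" by linarith
    then show "teq M (XX ^ (4 * n ^ 2) * inverse (E 2 2 (2 * n))) 0" by (rule teq_Xpow)
  qed auto
  have oB: "ods (E 4 4 M * (\<Sum>m\<in>B. f m))"
  proof (rule evs_ods_mult)
    show "evs (E 4 4 M)" by (rule evs_E) simp_all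
    show "ods (\<Sum>m\<in>B. f m)"
    proof (rule ods_sum)
      fix m assume "m \<in> B"
      then have "odd m" by (simp add: B_def)
      then have "odd (m ^ 2)" by simp
      then have "ods (inverse (E 2 2 m) * XX ^ (m ^ 2))"
        by (intro evs_ods_mult evs_inverse evs_E ods_Xpow) simp_all
      then show "ods (f m)" by (simp add: f_def mult.commute)
    qed
  qed
  have eul: "teq M (E 1 2 M) (\<Sum>m<M. f m)"
    using euler[of 1 2 M] by (simp add: f_def tri_sq)
  have gau: "teq M (E 4 4 M * E 1 2 M) (G 1)"
    using gauss[of 1 M] by simp
  have c1: "teq M (Aser M) (E 4 4 M * Ev)" using claim1[of M] by (simp add: Ev_def)
  have c2: "teq M (E 4 4 M * Ev) (E 4 4 M * (\<Sum>m\<in>A. f m))"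
    by (intro teq_mult teq_refl tEv)
  have c3: "teq M (E 4 4 M * E 1 2 M) (E 4 4 M * (\<Sum>m<M. f m))"
    by (intro teq_mult teq_refl eul)
  have "Aser M $ (2 * N) = (E 4 4 M * (\<Sum>m\<in>A. f m)) $ (2 * N)"
    using teq_trans[OF c1 c2] NM by (simp add: teq_def)
  also have "\<dots> = (E 4 4 M * (\<Sum>m\<in>A. f m)) $ (2 * N) + (E 4 4 M * (\<Sum>m\<in>B. f m)) $ (2 * N)"
    using oB by (simp add: ods_def)
  also have "\<dots> = (E 4 4 M * (\<Sum>m<M. f m)) $ (2 * N)"
    by (simp add: split distrib_left)
  also have "\<dots> = (E 4 4 M * E 1 2 M) $ (2 * N)"
    using c3 NM by (simp add: teq_def)
  also have "\<dots> = G 1 $ (2 * N)"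
    using gau NM by (simp add: teq_def)
  finally show ?thesis .
qed

lemma E_sq: "E c d n * E c d n = E (2 * c) (2 * d) n"
proof (induction n)
  case 0 then show ?case by simp
next
  case (Suc n)
  have sq: "(1 + XX ^ a) * (1 + XX ^ a) = 1 + XX ^ (2 * a)" for a
  proof -
    have "(1 + XX ^ a) * (1 + XX ^ a) = (1 + XX ^ a) + (XX ^ a + XX ^ a * XX ^ a)"
      by (simp only: distrib_right distrib_left mult_1_left mult_1_right)
    also have "\<dots> = 1 + XX ^ a * XX ^ a + (XX ^ a + XX ^ a)" by (simp only: add_ac)
    also have "\<dots> = 1 + XX ^ a * XX ^ a" by (simp only: fps_add_self add_0_right)
    also have "XX ^ a * XX ^ a = XX ^ (2 * a)" by (simp add: power_add[symmetric] mult_2)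
    finally show ?thesis .
  qed
  have "E c d (Suc n) * E c d (Suc n) = (E c d n * E c d n) * ((1 + XX ^ (c + d * n)) * (1 + XX ^ (c + d * n)))"
    by (simp add: E_Suc ac_simps)
  also have "\<dots> = E (2 * c) (2 * d) n * (1 + XX ^ (2 * (c + d * n)))"
    by (simp only: Suc sq)
  also have "2 * (c + d * n) = 2 * c + 2 * d * n" by simp
  finally show ?case by (simp only: E_Suc)
qed

lemma A0_coeff:
  assumes NM: "2 * N < M"
  shows "(E 4 4 M * inverse (E 2 4 M)) $ (2 * N) = G 2 $ (2 * N)"
proof -
  have t: "teq M (E 4 4 M) (E 4 4 (2 * M))" by (rule E_trunc) (simp add: min_def)
  have "E 4 4 (2 * M) = E 4 8 M * E 8 8 M" using E_split[of 4 4 M] by simp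
  also have "E 4 8 M = E 2 4 M * E 2 4 M" using E_sq[of 2 4 M] by simp
  finally have e: "E 4 4 (2 * M) * inverse (E 2 4 M) = E 8 8 M * E 2 4 M"
    by (simp add: ac_simps inv_cancel)
  have "teq M (E 4 4 M * inverse (E 2 4 M)) (E 4 4 (2 * M) * inverse (E 2 4 M))"
    by (intro teq_mult teq_refl t)
  also note e
  also have "teq M (E 8 8 M * E 2 4 M) (G 2)" using gauss[of 2 M] by simp
  finally show ?thesis using NM by (simp add: teq_def)
qed

definition Fser :: "nat \<Rightarrow> bit fps" where
  "Fser M = (\<Sum>j\<in>{1..<M}. XX ^ (2 * j ^ 2) * E (4 + 4 * j) 4 M * inverse (E (2 + 4 * j) 4 M))"

lemma Fser_coeff:
  assumes NM: "2 * N < M"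
  shows "Fser M $ (2 * N) = G 1 $ (2 * N) + G 2 $ (2 * N)"
proof -
  have M: "{..<M} = insert 0 {1..<M}" using NM by auto
  have "Aser M = E 4 4 M * inverse (E 2 4 M) + Fser M"
    unfolding Aser_def Fser_def M by (subst sum.insert) simp_all
  then have e: "Aser M $ (2 * N) = (E 4 4 M * inverse (E 2 4 M)) $ (2 * N) + Fser M $ (2 * N)" by simp
  define a where "a = (E 4 4 M * inverse (E 2 4 M)) $ (2 * N)"
  have "Fser M $ (2 * N) = (a + a) + Fser M $ (2 * N)" by (simp only: bit_add_self add_0_left)
  also have "\<dots> = a + (a + Fser M $ (2 * N))" by (simp only: add.assoc)
  also have "\<dots> = a + Aser M $ (2 * N)" using e by (simp add: a_def)
  also have "\<dots> = G 2 $ (2 * N) + G 1 $ (2 * N)" using Aser_coeff[OF NM] A0_coeff[OF NM] by (simp add: a_def)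
  finally show ?thesis by (simp only: add.commute[of "G 2 $ (2 * N)"])
qed

lemma mod5_red: "(m * (m + 1)) mod 5 = ((m mod 5) * (m mod 5 + 1)) mod (5::nat)"
proof -
  define q where "q = m div 5"
  define r where "r = m mod 5"
  have m: "m = 5 * q + r" by (simp add: q_def r_def)
  have eq: "m * (m + 1) = 5 * (q * (5 * q + 2 * r + 1)) + r * (r + 1)"
    unfolding m by (simp add: algebra_simps)
  show ?thesis by (simp only: eq mod_mult_self4 r_def)
qed

lemma mod5_cases: "(r::nat) < 5 \<Longrightarrow> (r * (r + 1)) mod 5 \<in> {0, 1, 2}"
proof -
  assume "r < 5"
  then have "r = 0 \<or> r = 1 \<or> r = 2 \<or> r = 3 \<or> r = 4" by arith
  then show ?thesis by auto
qed

lemma mod5_a: "(m * (m + 1)) mod 5 \<noteq> (3::nat)"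
  using mod5_cases[of "m mod 5"] mod5_red[of m] by auto

lemma mod5_b: "(m * (m + 1)) mod 5 \<noteq> (4::nat)"
  using mod5_cases[of "m mod 5"] mod5_red[of m] by auto

lemma tri_Suc_2: "2 * tri (Suc m) = m * (m + 1)"
  using tri_2[of "Suc m"] by simp

lemma G1_zero: "G 1 $ (2 * (5 * n + 2)) = 0"
proof -
  have "\<not> (\<exists>m. 2 * (5 * n + 2) = 1 * tri (Suc m))"
  proof
    assume "\<exists>m. 2 * (5 * n + 2) = 1 * tri (Suc m)"
    then obtain m where "2 * (5 * n + 2) = tri (Suc m)" by auto
    then have "m * (m + 1) = 20 * n + 8" using tri_Suc_2[of m] by simp
    then have "(m * (m + 1)) mod 5 = 3" by presburger
    then show False using mod5_a by simp
  qed
  then show ?thesis by (simp add: G_def)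
qed

lemma G2_zero: "G 2 $ (2 * (5 * n + 2)) = 0"
proof -
  have "\<not> (\<exists>m. 2 * (5 * n + 2) = 2 * tri (Suc m))"
  proof
    assume "\<exists>m. 2 * (5 * n + 2) = 2 * tri (Suc m)"
    then obtain m where "2 * (5 * n + 2) = 2 * tri (Suc m)" by auto
    then have "m * (m + 1) = 10 * n + 4" using tri_Suc_2[of m] by simp
    then have "(m * (m + 1)) mod 5 = 4" by presburger
    then show False using mod5_b by simp
  qed
  then show ?thesis by (simp add: G_def)
qed

definition PS :: "nat set \<Rightarrow> (nat \<Rightarrow> nat set) \<Rightarrow> nat \<Rightarrow> nat multiset set" where
  "PS S Mf n = {lam. set_mset lam \<subseteq> S \<and> (\<forall>s\<in>S. count lam s \<in> Mf s) \<and> sum_mset lam = n}"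

lemma PS_empty: "PS {} Mf n = (if n = 0 then {{#}} else {})"
  by (auto simp: PS_def)

lemma PS_insert:
  assumes s: "s \<notin> S" "s > 0"
  shows "PS (insert s S) Mf n = (\<Union>k\<in>{k\<in>Mf s. s * k \<le> n}. (\<lambda>l. l + replicate_mset k s) ` PS S Mf (n - s * k))"
proof (rule set_eqI, rule iffI)
  fix lam assume lam: "lam \<in> PS (insert s S) Mf n"
  define k where "k = count lam s"
  define l where "l = {#x \<in># lam. x \<noteq> s#}"
  have dec: "lam = l + replicate_mset k s"
    using multiset_partition[of lam "\<lambda>x. x = s"] by (simp add: l_def k_def filter_eq_replicate_mset add.commute)
  have sl: "sum_mset lam = sum_mset l + k * s"
    by (subst dec) simp
  have kM: "k \<in> Mf s" using lam by (simp add: PS_def k_def)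
  have skn: "s * k \<le> n" using lam sl by (simp add: PS_def mult.commute)
  have "l \<in> PS S Mf (n - s * k)"
  proof -
    have "set_mset l \<subseteq> S" using lam by (auto simp: PS_def l_def)
    moreover have "\<forall>t\<in>S. count l t \<in> Mf t"
    proof
      fix t assume t: "t \<in> S"
      then have "t \<noteq> s" using s by auto
      then have "count l t = count lam t" by (simp add: l_def)
      then show "count l t \<in> Mf t" using lam t by (simp add: PS_def)
    qed
    moreover have "sum_mset l = n - s * k"
    proof -
      have "sum_mset lam = n" using lam by (simp add: PS_def)
      moreover have "sum_mset l = sum_mset lam - k * s" using sl by simp
      ultimately show ?thesis by (simp add: mult.commute)
    qed
    ultimately show ?thesis by (simp add: PS_def)
  qed
  then show "lam \<in> (\<Union>k\<in>{k\<in>Mf s. s * k \<le> n}. (\<lambda>l. l + replicate_mset k s) ` PS S Mf (n - s * k))"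
    using kM skn dec by blast
next
  fix lam assume "lam \<in> (\<Union>k\<in>{k\<in>Mf s. s * k \<le> n}. (\<lambda>l. l + replicate_mset k s) ` PS S Mf (n - s * k))"
  then obtain k l where k: "k \<in> Mf s" "s * k \<le> n" and l: "l \<in> PS S Mf (n - s * k)"
    and lam: "lam = l + replicate_mset k s" by blast
  have ls: "count l s = 0" using l s by (auto simp: PS_def count_eq_zero_iff)
  have "set_mset lam \<subseteq> insert s S" using l lam by (auto simp: PS_def)
  moreover have "\<forall>t\<in>insert s S. count lam t \<in> Mf t"
  proof
    fix t assume t: "t \<in> insert s S"
    show "count lam t \<in> Mf t"
    proof (cases "t = s")
      case True then show ?thesis using ls k lam by simp
    next
      case False then show ?thesis using t l lam by (simp add: PS_def)
    qed
  qed
  moreover have "sum_mset lam = n" using l lam k by (simp add: PS_def mult.commute)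
  ultimately show "lam \<in> PS (insert s S) Mf n" by (simp add: PS_def)
qed

lemma count_PS:
  assumes "finite S" "0 \<notin> S" "w > 0"
  shows "\<forall>n \<le> K. finite (PS S Mf n) \<and>
    of_nat (card (PS S Mf n)) = (\<Prod>s\<in>S. \<Sum>k\<in>{k\<in>Mf s. k \<le> K}. XX ^ (w * s * k)) $ (w * n)"
  using assms(1,2)
proof (induction S rule: finite_induct)
  case empty
  then show ?case using assms(3) by (auto simp: PS_empty)
next
  case (insert s S)
  have s0: "s > 0" using insert.prems by auto
  have IH: "\<forall>n\<le>K. finite (PS S Mf n) \<and>
      of_nat (card (PS S Mf n)) = (\<Prod>s\<in>S. \<Sum>k\<in>{k\<in>Mf s. k \<le> K}. XX ^ (w * s * k)) $ (w * n)"
    using insert.IH insert.prems by auto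
  define P where "P = (\<Prod>s\<in>S. \<Sum>k\<in>{k\<in>Mf s. k \<le> K}. XX ^ (w * s * k))"
  show ?case
  proof (intro allI impI)
    fix n assume n: "n \<le> K"
    define I where "I = {k\<in>Mf s. s * k \<le> n}"
    define A where "A k = (\<lambda>l. l + replicate_mset k s) ` PS S Mf (n - s * k)" for k
    have finI: "finite I"
    proof (rule finite_subset[of _ "{..n}"])
      show "I \<subseteq> {..n}" using s0 by (auto simp: I_def intro: order.trans[OF le_mult_pos[OF s0]])
    qed simp
    have finA: "\<forall>k\<in>I. finite (A k)"
      using IH n by (auto simp: A_def I_def)
    have disj: "\<forall>i\<in>I. \<forall>j\<in>I. i \<noteq> j \<longrightarrow> A i \<inter> A j = {}"
    proof (intro ballI impI)
      fix i j :: nat assume "i \<noteq> j"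
      show "A i \<inter> A j = {}"
      proof (rule ccontr)
        assume "A i \<inter> A j \<noteq> {}"
        then obtain l1 l2 where l1: "l1 \<in> PS S Mf (n - s * i)" and l2: "l2 \<in> PS S Mf (n - s * j)"
          and eq: "l1 + replicate_mset i s = l2 + replicate_mset j s" by (auto simp: A_def)
        have "count l1 s = 0" "count l2 s = 0" using l1 l2 insert.hyps by (auto simp: PS_def count_eq_zero_iff)
        then have "count (l1 + replicate_mset i s) s = i" "count (l2 + replicate_mset j s) s = j" by simp_all
        then show False using eq \<open>i \<noteq> j\<close> by simp
      qed
    qed
    have PSeq: "PS (insert s S) Mf n = (\<Union>k\<in>I. A k)"
      unfolding I_def A_def by (rule PS_insert) (use insert.hyps s0 in auto)
    have cardA: "card (A k) = card (PS S Mf (n - s * k))" for k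
      unfolding A_def by (rule card_image) (auto simp: inj_on_def)
    have fin: "finite (PS (insert s S) Mf n)" using finI finA PSeq by simp
    have "card (PS (insert s S) Mf n) = (\<Sum>k\<in>I. card (PS S Mf (n - s * k)))"
      unfolding PSeq using card_UN_disjoint[OF finI finA disj] cardA by simp
    then have c: "of_nat (card (PS (insert s S) Mf n)) = (\<Sum>k\<in>I. (of_nat (card (PS S Mf (n - s * k))) :: bit))"
      by simp
    also have "\<dots> = (\<Sum>k\<in>I. P $ (w * (n - s * k)))"
    proof (rule sum.cong)
      fix k assume "k \<in> I"
      then have "n - s * k \<le> K" using n by simp
      then show "of_nat (card (PS S Mf (n - s * k))) = P $ (w * (n - s * k))" using IH by (simp add: P_def)
    qed simp
    also have "\<dots> = ((\<Sum>k\<in>{k\<in>Mf s. k \<le> K}. XX ^ (w * s * k)) * P) $ (w * n)"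
    proof -
      have "((\<Sum>k\<in>{k\<in>Mf s. k \<le> K}. XX ^ (w * s * k)) * P) $ (w * n) =
          (\<Sum>k\<in>{k\<in>Mf s. k \<le> K}. (XX ^ (w * s * k) * P) $ (w * n))"
        by (simp add: sum_distrib_right fps_sum_nth)
      also have "\<dots> = (\<Sum>k\<in>{k\<in>Mf s. k \<le> K}. if s * k \<le> n then P $ (w * (n - s * k)) else 0)"
      proof (rule sum.cong)
        fix k
        have "(XX ^ (w * s * k) * P) $ (w * n) = (if w * n < w * s * k then 0 else P $ (w * n - w * s * k))"
          by (simp add: fps_X_power_mult_nth)
        also have "\<dots> = (if s * k \<le> n then P $ (w * (n - s * k)) else 0)"
          using assms(3) by (auto simp: diff_mult_distrib2 mult.assoc)
        finally show "(XX ^ (w * s * k) * P) $ (w * n) = (if s * k \<le> n then P $ (w * (n - s * k)) else 0)" .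
      qed simp
      also have "\<dots> = (\<Sum>k\<in>{k\<in>{k\<in>Mf s. k \<le> K}. s * k \<le> n}. P $ (w * (n - s * k)))"
        by (rule sum.inter_filter[symmetric]) simp
      also have "{k\<in>{k\<in>Mf s. k \<le> K}. s * k \<le> n} = I"
        using n s0 by (auto simp: I_def intro: order.trans[OF le_mult_pos[OF s0]])
      finally show ?thesis by simp
    qed
    also have "\<dots> = (\<Prod>s\<in>insert s S. \<Sum>k\<in>{k\<in>Mf s. k \<le> K}. XX ^ (w * s * k)) $ (w * n)"
      using insert.hyps by (simp add: P_def)
    finally show "finite (PS (insert s S) Mf n) \<and> of_nat (card (PS (insert s S) Mf n)) =
        (\<Prod>s\<in>insert s S. \<Sum>k\<in>{k\<in>Mf s. k \<le> K}. XX ^ (w * s * k)) $ (w * n)"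
      using fin by simp
  qed
qed

definition Mj :: "nat \<Rightarrow> nat \<Rightarrow> nat set" where
  "Mj j s = (if odd s \<and> s < 2 * j then {1} else if even s \<and> s \<le> 2 * j then {0}
     else if even s then {0, 1} else UNIV)"

lemma mem_le_sum: "(p::nat) \<in># lam \<Longrightarrow> p \<le> sum_mset lam"
  using sum_mset.remove[of p lam] by simp

lemma c2_set:
  assumes j: "1 \<le> j" "j \<le> N"
  shows "{lam. is_partition lam N \<and> c2_cond j lam} = PS {1..2 * N} (Mj j) N"
proof (rule set_eqI, rule iffI)
  fix lam assume "lam \<in> {lam. is_partition lam N \<and> c2_cond j lam}"
  then have P: "\<forall>p\<in>#lam. p > 0" "sum_mset lam = N"
    and C: "\<forall>i\<in>{1..j}. count lam (2 * i - 1) = 1" "\<forall>p\<in>#lam. even p \<longrightarrow> p > 2 * j \<and> count lam p = 1"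
    by (auto simp: is_partition_def c2_cond_def)
  have "set_mset lam \<subseteq> {1..2 * N}"
  proof
    fix p assume p: "p \<in> set_mset lam"
    then have "p \<le> N" using mem_le_sum[of p lam] P by simp
    then show "p \<in> {1..2 * N}" using P p by force
  qed
  moreover have "\<forall>s\<in>{1..2 * N}. count lam s \<in> Mj j s"
  proof
    fix s assume s: "s \<in> {1..2 * N}"
    show "count lam s \<in> Mj j s"
    proof (cases "odd s \<and> s < 2 * j")
      case True
      then obtain i where i: "s = 2 * i + 1" by (auto elim!: oddE)
      then have "Suc i \<in> {1..j}" "2 * Suc i - 1 = s" using True by auto
      then have "count lam s = 1" using C(1) by metis
      then show ?thesis using True by (simp add: Mj_def)
    next
      case F1: False
      show ?thesis
      proof (cases "even s")
        case ev: True
        show ?thesis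
        proof (cases "s \<le> 2 * j")
          case True
          then have "count lam s = 0" using C(2) ev by (metis count_eq_zero_iff not_le)
          then show ?thesis using True ev by (simp add: Mj_def)
        next
          case gt: False
          have "count lam s = 0 \<or> count lam s = 1" using C(2) ev by (metis count_eq_zero_iff)
          then show ?thesis using gt ev by (auto simp: Mj_def)
        qed
      next
        case False then show ?thesis using F1 by (simp add: Mj_def)
      qed
    qed
  qed
  ultimately show "lam \<in> PS {1..2 * N} (Mj j) N" using P by (simp add: PS_def)
next
  fix lam assume "lam \<in> PS {1..2 * N} (Mj j) N"
  then have S: "set_mset lam \<subseteq> {1..2 * N}" and Cn: "\<forall>s\<in>{1..2 * N}. count lam s \<in> Mj j s"
    and Sm: "sum_mset lam = N" by (auto simp: PS_def)
  have "is_partition lam N" using S Sm by (auto simp: is_partition_def)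
  moreover have "c2_cond j lam"
  proof -
    have "\<forall>i\<in>{1..j}. count lam (2 * i - 1) = 1"
    proof
      fix i assume i: "i \<in> {1..j}"
      then have s: "2 * i - 1 \<in> {1..2 * N}" using j by auto
      have "odd (2 * i - 1)" "2 * i - 1 < 2 * j" using i by auto
      then have "Mj j (2 * i - 1) = {1}" by (simp add: Mj_def)
      then show "count lam (2 * i - 1) = 1" using Cn s by auto
    qed
    moreover have "\<forall>p\<in>#lam. even p \<longrightarrow> p > 2 * j \<and> count lam p = 1"
    proof (intro ballI impI)
      fix p assume p: "p \<in># lam" and ev: "even p"
      then have ps: "p \<in> {1..2 * N}" using S by auto
      have c0: "count lam p \<noteq> 0" using p by simp
      show "p > 2 * j \<and> count lam p = 1"
      proof (cases "p \<le> 2 * j")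
        case True
        then have "Mj j p = {0}" using ev by (simp add: Mj_def)
        then have "count lam p = 0" using Cn ps by auto
        then show ?thesis using c0 by simp
      next
        case False
        then have "Mj j p = {0, 1}" using ev by (simp add: Mj_def)
        then have "count lam p \<in> {0, 1}" using Cn ps by auto
        then show ?thesis using c0 False by auto
      qed
    qed
    ultimately show ?thesis using j by (simp add: c2_cond_def)
  qed
  ultimately show "lam \<in> {lam. is_partition lam N \<and> c2_cond j lam}" by simp
qed

lemma c2_sum: "c2 N = (\<Sum>j\<in>{1..N}. card (PS {1..2 * N} (Mj j) N))"
proof -
  have eq: "{(j, lam). is_partition lam N \<and> c2_cond j lam} = (SIGMA j:{1..N}. {lam. is_partition lam N \<and> c2_cond j lam})"
  proof (rule set_eqI, rule iffI)
    fix x assume "x \<in> {(j, lam). is_partition lam N \<and> c2_cond j lam}"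
    then obtain j lam where x: "x = (j, lam)" and P: "is_partition lam N" and C: "c2_cond j lam" by auto
    have j1: "j \<ge> 1" using C by (simp add: c2_cond_def)
    then have "count lam (2 * j - 1) = 1" using C by (simp add: c2_cond_def)
    then have "2 * j - 1 \<in># lam" by (metis count_eq_zero_iff zero_neq_one)
    then have "2 * j - 1 \<le> N" using mem_le_sum P by (fastforce simp: is_partition_def)
    then have "j \<le> N" using j1 by simp
    then show "x \<in> (SIGMA j:{1..N}. {lam. is_partition lam N \<and> c2_cond j lam})" using x P C j1 by simp
  qed auto
  have fin: "\<forall>j\<in>{1..N}. finite {lam. is_partition lam N \<and> c2_cond j lam}"
  proof
    fix j assume j: "j \<in> {1..N}"
    have "finite (PS {1..2 * N} (Mj j) N)"
      using count_PS[of "{1..2 * N}" 1 N "Mj j"] by simp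
    then show "finite {lam. is_partition lam N \<and> c2_cond j lam}" using c2_set[of j N] j by simp
  qed
  have "c2 N = (\<Sum>j\<in>{1..N}. card {lam. is_partition lam N \<and> c2_cond j lam})"
    unfolding c2_def eq using fin by simp
  also have "\<dots> = (\<Sum>j\<in>{1..N}. card (PS {1..2 * N} (Mj j) N))"
    by (rule sum.cong) (simp_all add: c2_set)
  finally show ?thesis .
qed

lemma prod_1_2N: "(\<Prod>s\<in>{1..2 * N}. f s) = (\<Prod>i<N. f (2 * i + 1) * f (2 * i + 2))" for f :: "nat \<Rightarrow> bit fps"
proof (induction N)
  case 0 then show ?case by simp
next
  case (Suc N)
  have "{1..2 * Suc N} = insert (2 * N + 2) (insert (2 * N + 1) {1..2 * N})" by auto
  then have "(\<Prod>s\<in>{1..2 * Suc N}. f s) = f (2 * N + 2) * (f (2 * N + 1) * (\<Prod>s\<in>{1..2 * N}. f s))"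
    by simp
  then show ?case using Suc by (simp add: ac_simps)
qed

lemma geo_tele: "(1 + XX ^ a) * (\<Sum>k\<le>N. XX ^ (a * k)) = 1 + XX ^ (a * (N + 1))"
proof (induction N)
  case 0 then show ?case by simp
next
  case (Suc N)
  have "(1 + XX ^ a) * (\<Sum>k\<le>Suc N. XX ^ (a * k)) = (1 + XX ^ (a * (N + 1))) + XX ^ (a * (N + 1)) * (1 + XX ^ a)"
    using Suc by (simp add: distrib_left ac_simps)
  also have "\<dots> = 1 + XX ^ (a * (N + 1) + a)" by (rule bit_pow_identity)
  finally show ?case by (simp add: algebra_simps)
qed

lemma geo_inv:
  assumes a: "a > 0" and M: "M \<le> a * (N + 1)"
  shows "teq M (\<Sum>k\<le>N. XX ^ (a * k)) (inverse (1 + XX ^ a))"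
proof -
  have u: "(1 + XX ^ a) $ 0 \<noteq> 0" using a by simp
  have "teq M ((1 + XX ^ a) * (\<Sum>k\<le>N. XX ^ (a * k))) 1"
    unfolding geo_tele by (rule teq_one_plus[OF M])
  then have "teq M (inverse (1 + XX ^ a) * ((1 + XX ^ a) * (\<Sum>k\<le>N. XX ^ (a * k)))) (inverse (1 + XX ^ a) * 1)"
    by (intro teq_mult teq_refl)
  moreover have "inverse (1 + XX ^ a) * ((1 + XX ^ a) * (\<Sum>k\<le>N. XX ^ (a * k))) = (\<Sum>k\<le>N. XX ^ (a * k))"
    using u by (simp add: mult.assoc[symmetric] inverse_mult_eq_1)
  ultimately show ?thesis by simp
qed

lemma inverse_E: "inverse (E c d n) = (\<Prod>i<n. inverse (1 + XX ^ (c + d * i)))"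
  by (induction n) (simp_all add: E_Suc fps_inverse_mult)

lemma teq_prod_lessThan:
  fixes n :: nat and f g :: "nat \<Rightarrow> bit fps"
  assumes "\<And>i. i < n \<Longrightarrow> teq M (f i) (g i)"
  shows "teq M (\<Prod>i<n. f i) (\<Prod>i<n. g i)"
  using assms
proof (induction n)
  case 0 then show ?case by simp
next
  case (Suc n)
  have "teq M ((\<Prod>i<n. f i) * f n) ((\<Prod>i<n. g i) * g n)"
    by (intro teq_mult Suc.IH Suc.prems) auto
  then show ?case by simp
qed

lemma prod_fac:
  assumes j: "1 \<le> j" "j \<le> N"
  shows "teq (2 * N + 1) (\<Prod>s\<in>{1..2 * N}. \<Sum>k\<in>{k\<in>Mj j s. k \<le> N}. XX ^ (2 * s * k))
     (XX ^ (2 * j ^ 2) * E (4 + 4 * j) 4 (2 * N + 1) * inverse (E (2 + 4 * j) 4 (2 * N + 1)))"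
proof -
  define F where "F s = (\<Sum>k\<in>{k\<in>Mj j s. k \<le> N}. XX ^ (2 * s * k))" for s
  define L where "L = N - j"
  have NL: "N = j + L" using j by (simp add: L_def)
  have N1: "N \<ge> 1" using j by simp
  have Fo: "F (2 * i + 1) = XX ^ (2 * (2 * i + 1))" if "i < j" for i
  proof -
    have "Mj j (2 * i + 1) = {1}" using that by (simp add: Mj_def)
    then have "{k\<in>Mj j (2 * i + 1). k \<le> N} = {1}" using N1 by auto
    then show ?thesis by (simp add: F_def)
  qed
  have Fo': "F (2 * (j + l) + 1) = (\<Sum>k\<le>N. XX ^ ((2 + 4 * j + 4 * l) * k))" for l
  proof -
    have "Mj j (2 * (j + l) + 1) = UNIV" by (simp add: Mj_def)
    then have "{k\<in>Mj j (2 * (j + l) + 1). k \<le> N} = {..N}" by auto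
    moreover have "2 * (2 * (j + l) + 1) = 2 + 4 * j + 4 * l" by simp
    ultimately show ?thesis by (simp add: F_def)
  qed
  have Fe: "F (2 * i + 2) = 1" if "i < j" for i
  proof -
    have "Mj j (2 * i + 2) = {0}" using that by (simp add: Mj_def)
    then have "{k\<in>Mj j (2 * i + 2). k \<le> N} = {0}" by auto
    then show ?thesis by (simp add: F_def)
  qed
  have Fgen: "F s = 1 + XX ^ (2 * s)" if "Mj j s = {0, 1}" for s
  proof -
    have "{k\<in>Mj j s. k \<le> N} = {0, 1}" using that N1 by auto
    then show ?thesis by (simp add: F_def)
  qed
  have Fe': "F (2 * (j + l) + 2) = 1 + XX ^ (4 + 4 * j + 4 * l)" for l
  proof -
    have "Mj j (2 * (j + l) + 2) = {0, 1}" by (simp add: Mj_def)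
    then have "F (2 * (j + l) + 2) = 1 + XX ^ (2 * (2 * (j + l) + 2))" by (rule Fgen)
    moreover have "2 * (2 * (j + l) + 2) = 4 + 4 * j + 4 * l" by simp
    ultimately show ?thesis by (simp only:)
  qed
  have "(\<Prod>s\<in>{1..2 * N}. F s) = (\<Prod>i<N. F (2 * i + 1)) * (\<Prod>i<N. F (2 * i + 2))"
    by (simp only: prod_1_2N prod.distrib)
  also have "(\<Prod>i<N. F (2 * i + 1)) = (\<Prod>i<j. F (2 * i + 1)) * (\<Prod>l<L. F (2 * (j + l) + 1))"
    unfolding NL by (rule prod_lessThan_add)
  also have "(\<Prod>i<j. F (2 * i + 1)) = XX ^ (2 * j ^ 2)"
  proof -
    have "(\<Prod>i<j. F (2 * i + 1)) = (\<Prod>i<j. XX ^ (2 * (2 * i + 1)))"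
    proof (rule prod.cong)
      fix i assume "i \<in> {..<j}"
      then show "F (2 * i + 1) = XX ^ (2 * (2 * i + 1))" by (intro Fo) simp
    qed simp
    also have "\<dots> = XX ^ (\<Sum>i<j. 2 * (2 * i + 1))" by (simp add: power_sum)
    also have "(\<Sum>i<j. 2 * (2 * i + 1)) = 4 * tri j + 2 * j"
      by (induction j) simp_all
    also have "\<dots> = 2 * j ^ 2" by (rule tri4)
    finally show ?thesis .
  qed
  also have "(\<Prod>i<N. F (2 * i + 2)) = (\<Prod>i<j. F (2 * i + 2)) * (\<Prod>l<L. F (2 * (j + l) + 2))"
    unfolding NL by (rule prod_lessThan_add)
  also have "(\<Prod>i<j. F (2 * i + 2)) = 1"
  proof (rule prod.neutral, intro ballI)
    fix i assume "i \<in> {..<j}"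
    then show "F (2 * i + 2) = 1" by (intro Fe) simp
  qed
  also have "(\<Prod>l<L. F (2 * (j + l) + 2)) = E (4 + 4 * j) 4 L"
    unfolding E_def
  proof (rule prod.cong)
    fix l
    have "4 + 4 * j + 4 * l = 4 + 4 * j + 4 * l" ..
    show "F (2 * (j + l) + 2) = 1 + XX ^ (4 + 4 * j + 4 * l)" by (rule Fe')
  qed simp
  finally have eq: "(\<Prod>s\<in>{1..2 * N}. F s) = XX ^ (2 * j ^ 2) * (\<Prod>l<L. F (2 * (j + l) + 1)) * E (4 + 4 * j) 4 L"
    by simp
  have t1: "teq (2 * N + 1) (\<Prod>l<L. F (2 * (j + l) + 1)) (inverse (E (2 + 4 * j) 4 L))"
    unfolding inverse_E
  proof (rule teq_prod_lessThan)
    fix l assume "l < L"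
    have "2 * N + 1 \<le> (2 + 4 * j + 4 * l) * (N + 1)" by (simp add: algebra_simps)
    then show "teq (2 * N + 1) (F (2 * (j + l) + 1)) (inverse (1 + XX ^ (2 + 4 * j + 4 * l)))"
      unfolding Fo' by (intro geo_inv) simp_all
  qed
  have mL: "min (2 * N + 1) L = L" by (simp add: L_def)
  have b2: "2 * N + 1 \<le> 2 + 4 * j + 4 * min (2 * N + 1) L" unfolding mL using NL by simp
  have b4: "2 * N + 1 \<le> 4 + 4 * j + 4 * min (2 * N + 1) L" unfolding mL using NL by simp
  have t2: "teq (2 * N + 1) (inverse (E (2 + 4 * j) 4 L)) (inverse (E (2 + 4 * j) 4 (2 * N + 1)))"
    by (rule teq_inverse) (rule E_trunc[OF b2], simp)
  have t3: "teq (2 * N + 1) (E (4 + 4 * j) 4 L) (E (4 + 4 * j) 4 (2 * N + 1))"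
    by (rule E_trunc[OF b4])
  have "teq (2 * N + 1) (XX ^ (2 * j ^ 2) * (\<Prod>l<L. F (2 * (j + l) + 1)) * E (4 + 4 * j) 4 L)
      (XX ^ (2 * j ^ 2) * inverse (E (2 + 4 * j) 4 (2 * N + 1)) * E (4 + 4 * j) 4 (2 * N + 1))"
    by (intro teq_mult teq_refl teq_trans[OF t1 t2] t3)
  then show ?thesis unfolding F_def[symmetric] eq by (simp add: ac_simps)
qed

lemma of_nat_bit: "(of_nat k :: bit) = (if even k then 0 else 1)"
  by (induction k) auto

lemma c2_coeff: "of_nat (c2 N) = Fser (2 * N + 1) $ (2 * N)"
proof -
  define T where "T j = XX ^ (2 * j ^ 2) * E (4 + 4 * j) 4 (2 * N + 1) * inverse (E (2 + 4 * j) 4 (2 * N + 1))" for j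
  have "(of_nat (c2 N) :: bit) = (\<Sum>j\<in>{1..N}. of_nat (card (PS {1..2 * N} (Mj j) N)))"
    by (simp add: c2_sum)
  also have "\<dots> = (\<Sum>j\<in>{1..N}. T j $ (2 * N))"
  proof (rule sum.cong)
    fix j assume j: "j \<in> {1..N}"
    have "of_nat (card (PS {1..2 * N} (Mj j) N)) =
        (\<Prod>s\<in>{1..2 * N}. \<Sum>k\<in>{k\<in>Mj j s. k \<le> N}. XX ^ (2 * s * k)) $ (2 * N)"
      using count_PS[of "{1..2 * N}" 2 N "Mj j"] by simp
    also have "\<dots> = T j $ (2 * N)"
      using prod_fac[of j N] j by (simp add: teq_def T_def)
    finally show "of_nat (card (PS {1..2 * N} (Mj j) N)) = T j $ (2 * N)" .
  qed simp
  also have "\<dots> = (\<Sum>j\<in>{1..N}. T j) $ (2 * N)" by (simp add: fps_sum_nth)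
  also have "\<dots> = Fser (2 * N + 1) $ (2 * N)"
  proof -
    have "teq (2 * N + 1) (Fser (2 * N + 1)) (\<Sum>j\<in>{1..N}. T j)"
      unfolding Fser_def T_def[symmetric]
    proof (rule teq_sum_restrict)
      fix j assume j: "j \<in> {1..<2 * N + 1} - {1..N}"
      then have "j \<ge> N + 1" by auto
      moreover have "j \<le> j ^ 2" by (simp add: power2_eq_square)
      ultimately have "2 * N + 1 \<le> 2 * j ^ 2" by linarith
      then have "teq (2 * N + 1) (XX ^ (2 * j ^ 2) * (E (4 + 4 * j) 4 (2 * N + 1) * inverse (E (2 + 4 * j) 4 (2 * N + 1)))) 0"
        by (rule teq_Xpow)
      then show "teq (2 * N + 1) (T j) 0" by (simp add: T_def mult.assoc)
    qed auto
    then show ?thesis by (simp add: teq_def)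
  qed
  finally show ?thesis .
qed

theorem theorem2:
  fixes n :: nat
  shows "even (c2 (5*n + 2))"
proof -
  define N where "N = 5 * n + 2"
  have "(of_nat (c2 N) :: bit) = Fser (2 * N + 1) $ (2 * N)" by (rule c2_coeff)
  also have "\<dots> = G 1 $ (2 * N) + G 2 $ (2 * N)" by (rule Fser_coeff) simp
  also have "\<dots> = 0" using G1_zero[of n] G2_zero[of n] by (simp add: N_def)
  finally have "(of_nat (c2 N) :: bit) = 0" .
  then show ?thesis by (simp add: of_nat_bit N_def split: if_splits)
qed

end
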